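(* Let $n$ individuals be connected by a directed graph with edge set $E\subseteq[n]\times[n]$ (self-loops allowed), in-neighborhoods $\mathcal{N}_i=\{j:(j,i)\in E\}$, and let $d$ be the maximum of the maximum in-degree and maximum out-degree. Suppose $Y_i(\mathbf z)=\sum_{\mathcal S\subseteq\mathcal N_i,|\mathcal S|\le\beta}c_{i,\mathcal S}\prod_{j\in\mathcal S}z_j$ for all $i$ and $\mathbf z\in\{0,1\}^n$, let $Y_{\max}=\max_i\sum_{\mathcal S\subseteq\mathcal N_i,|\mathcal S|\le\beta}|c_{i,\mathcal S}|$, and $\mathrm{TTE}=\frac1n\sum_i(Y_i(\mathbf 1)-Y_i(\mathbf 0))$. Consider a staggered rollout completely randomized design with integer treatment counts $0=k_0<k_1<\dots<k_\beta\le n$: $\mathbf z^0=\mathbf 0$, and for $t\ge1$, $\mathbf z^t$ is obtained from $\mathbf z^{t-1}$ by treating $k_t-k_{t-1}$ additional individuals chosen uniformly at random among the untreated ones (so $\mathbf z^t$ is marginally the indicator of a uniformly random $k_t$-subset, and treatments are monotone in $t$). Observations are $Y^{\mathrm{obs}}_{i,t}=Y_i(\mathbf z^t)+\varepsilon_{i,t}$, with $\varepsilon_{i,t}$ i.i.d. $N(0,\sigma^2)$ independent of the treatments. With $x_t=k_t/n$, define $$\widehat{\mathrm{TTE}}_{\mathrm{PI}}(\mathbf k/n)=\sum_{t=0}^\beta\big(\ell_{t}(1)-\ell_{t}(0)\big)\Big(\frac1n\sum_{i=1}^nY^{\mathrm{obs}}_{i,t}\Big),\qquad \ell_t(x)=\prod_{s\ne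 t}\frac{x-x_s}{x_t-x_s},$$ and $\Delta_{\mathbf k}=\min_{1\le t\le\beta}(k_t-k_{t-1})$. Then this estimator is unbiased for $\mathrm{TTE}$ and has variance $$O\Big(\beta^2Y_{\max}^2\Big(\tfrac{d^2}{n}+\tfrac{\beta^2}{k_1}\Big)\big(\tfrac{n}{\Delta_{\mathbf k}}\big)^{2\beta}+\tfrac{\sigma^2\beta}{n}\big(\tfrac{n}{\Delta_{\mathbf k}}\big)^{2\beta}\Big).$$
   Context: $\ell_t$ are the Lagrange interpolation basis polynomials for the nodes $k_0/n,\dots,k_\beta/n$. *)

theory Defs
  imports "HOL-Probability.Probability"
begin

definition in_nbhd :: "(nat \<times> nat) set \<Rightarrow> nat \<Rightarrow> nat set" where
  "in_nbhd E i = {j. (j, i) \<in> E}"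

definition out_nbhd :: "(nat \<times> nat) set \<Rightarrow> nat \<Rightarrow> nat set" where
  "out_nbhd E i = {j. (i, j) \<in> E}"

definition max_degree :: "nat \<Rightarrow> (nat \<times> nat) set \<Rightarrow> nat" where
  "max_degree n E = max (Max ((\<lambda>i. card (in_nbhd E i)) ` {..<n}))
                         (Max ((\<lambda>i. card (out_nbhd E i)) ` {..<n}))"

definition small_subsets :: "(nat \<times> nat) set \<Rightarrow> nat \<Rightarrow> nat \<Rightarrow> nat set set" where
  "small_subsets E beta i = {S. S \<subseteq> in_nbhd E i \<and> card S \<le> beta}"

definition Y_max :: "nat \<Rightarrow> (nat \<times> nat) set \<Rightarrow> nat \<Rightarrow> (nat \<Rightarrow> nat set \<Rightarrow> real) \<Rightarrow> real" where
  "Y_max n E beta c = Max ((\<lambda>i. \<Sum>S\<in>small_subsets E beta i. \<bar>c i S\<bar>) ` {..<n})"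

text \<open>Treatment vectors z in {0,1}^n are represented by the treated sets {j<n. z_j = 1}.\<close>
definition TTE :: "nat \<Rightarrow> (nat \<Rightarrow> nat set \<Rightarrow> real) \<Rightarrow> real" where
  "TTE n Y = (1 / real n) * (\<Sum>i<n. Y i {..<n} - Y i {})"

text \<open>Staggered rollout completely randomized design: the result maps stage t to the
  treated set at stage t (only stages 0..T are meaningful).\<close>
fun rollout :: "nat \<Rightarrow> (nat \<Rightarrow> nat) \<Rightarrow> nat \<Rightarrow> (nat \<Rightarrow> nat set) pmf" where
  "rollout n k 0 = return_pmf (\<lambda>_. {})"
| "rollout n k (Suc t) =
     bind_pmf (rollout n k t) (\<lambda>Z.
       bind_pmf (pmf_of_set {B. B \<subseteq> {..<n} - Z t \<and> card B = k (Suc t) - k t}) (\<lambda>B.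
         return_pmf (Z(Suc t := Z t \<union> B))))"

definition lagrange_basis :: "(nat \<Rightarrow> real) \<Rightarrow> nat \<Rightarrow> nat \<Rightarrow> real \<Rightarrow> real" where
  "lagrange_basis x beta t y = (\<Prod>s\<in>{0..beta} - {t}. (y - x s) / (x t - x s))"

text \<open>Joint law of treatments and (standardised) noise: the treatment sequence from the
  rollout, independent of i.i.d. standard normals g(i,t), i<n, t<=beta.
  The noise is eps(i,t) = sigma * g(i,t) ~ N(0, sigma^2).\<close>
definition design_measure :: "nat \<Rightarrow> (nat \<Rightarrow> nat) \<Rightarrow> nat
     \<Rightarrow> ((nat \<Rightarrow> nat set) \<times> (nat \<times> nat \<Rightarrow> real)) measure" where
  "design_measure n k beta =
     measure_pmf (rollout n k beta) \<Otimes>\<^sub>M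
     PiM ({..<n} \<times> {..beta}) (\<lambda>_. density lborel std_normal_density)"

definition TTE_PI :: "nat \<Rightarrow> (nat \<Rightarrow> nat) \<Rightarrow> nat \<Rightarrow> real \<Rightarrow> (nat \<Rightarrow> nat set \<Rightarrow> real)
     \<Rightarrow> (nat \<Rightarrow> nat set) \<times> (nat \<times> nat \<Rightarrow> real) \<Rightarrow> real" where
  "TTE_PI n k beta \<sigma> Y \<omega> =
     (let x = (\<lambda>t. real (k t) / real n); Z = fst \<omega>; g = snd \<omega> in
      \<Sum>t\<in>{0..beta}. (lagrange_basis x beta t 1 - lagrange_basis x beta t 0) *
         ((1 / real n) * (\<Sum>i<n. Y i (Z t) + \<sigma> * g (i, t))))"

definition min_gap :: "(nat \<Rightarrow> nat) \<Rightarrow> nat \<Rightarrow> nat" where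
  "min_gap k beta = Min ((\<lambda>t. k t - k (t - 1)) ` {1..beta})"

end

theory Submission
  imports Defs "HOL-Computational_Algebra.Polynomial"
begin

definition lpoly :: "(nat \<Rightarrow> real) \<Rightarrow> nat \<Rightarrow> nat \<Rightarrow> real poly" where
  "lpoly x beta t = (\<Prod>s\<in>{0..beta} - {t}. [:- x s / (x t - x s), 1 / (x t - x s):])"

lemma poly_lpoly: "poly (lpoly x beta t) y = lagrange_basis x beta t y"
  unfolding lpoly_def lagrange_basis_def poly_prod
  by (intro prod.cong refl) (simp add: diff_divide_distrib)

lemma degree_lpoly: assumes "t \<le> beta" shows "degree (lpoly x beta t) \<le> beta"
proof -
  have "degree (lpoly x beta t) \<le> (\<Sum>s\<in>{0..beta} - {t}. (degree \<circ> (\<lambda>s. [:- x s / (x t - x s), 1 / (x t - x s):])) s)"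
    unfolding lpoly_def by (rule degree_prod_sum_le) simp
  also have "\<dots> \<le> (\<Sum>s\<in>{0..beta} - {t}. 1)"
    by (intro sum_mono) (simp add: o_def)
  also have "\<dots> \<le> beta" by (use assms in \<open>auto simp: card_Diff_singleton\<close>)
  finally show ?thesis .
qed

lemma lagrange_basis_node:
  assumes inj: "inj_on x {0..beta}" and t: "t \<in> {0..beta}" and u: "u \<in> {0..beta}"
  shows "lagrange_basis x beta t (x u) = (if t = u then 1 else 0)"
proof (cases "t = u")
  case True
  have "\<And>s. s \<in> {0..beta} - {t} \<Longrightarrow> x t \<noteq> x s"
    using inj t by (auto dest: inj_onD)
  then show ?thesis unfolding lagrange_basis_def using True
    by (auto intro!: prod.neutral)
next
  case False
  then have "u \<in> {0..beta} - {t}" using u by auto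
  then show ?thesis unfolding lagrange_basis_def using False
    by (auto intro!: prod_zero bexI[of _ u])
qed

lemma lagrange_exact:
  fixes x :: "nat \<Rightarrow> real"
  assumes inj: "inj_on x {0..beta}" and deg: "degree p \<le> beta"
  shows "(\<Sum>t\<in>{0..beta}. poly p (x t) * lagrange_basis x beta t y) = poly p y"
proof -
  define Q where "Q = (\<Sum>t\<in>{0..beta}. smult (poly p (x t)) (lpoly x beta t)) - p"
  have dQ: "degree Q \<le> beta"
    unfolding Q_def
    by (intro degree_diff_le deg degree_sum_le) (auto intro!: order.trans[OF degree_smult_le] degree_lpoly)
  have roots: "poly Q (x u) = 0" if u: "u \<in> {0..beta}" for u
  proof -
    have "(\<Sum>t\<in>{0..beta}. poly p (x t) * lagrange_basis x beta t (x u)) = poly p (x u)"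
      using u by (simp add: lagrange_basis_node[OF inj] if_distrib cong: if_cong)
    then show ?thesis by (simp add: Q_def poly_sum poly_lpoly)
  qed
  have "Q = 0"
  proof (rule ccontr)
    assume "Q \<noteq> 0"
    then have "card {z. poly Q z = 0} \<le> beta" using card_poly_roots_bound dQ by (metis le_trans)
    moreover have "x ` {0..beta} \<subseteq> {z. poly Q z = 0}" using roots by auto
    then have "card (x ` {0..beta}) \<le> card {z. poly Q z = 0}"
      using poly_roots_finite[OF \<open>Q \<noteq> 0\<close>] by (intro card_mono)
    moreover have "card (x ` {0..beta}) = beta + 1" using inj by (simp add: card_image)
    ultimately show False by simp
  qed
  then have "poly Q y = 0" by simp
  then show ?thesis by (simp add: Q_def poly_sum poly_lpoly)
qed

definition pr :: "nat \<Rightarrow> nat \<Rightarrow> nat \<Rightarrow> real" where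
  "pr n K r = (\<Prod>i<r. (real K - real i) / (real n - real i))"

lemma prod_lessThan_add_split:
  fixes a b :: nat shows "(\<Prod>i<a+b. f i) = (\<Prod>i<a. f i) * (\<Prod>i<b. f (a + i)::real)"
  by (induction b) (auto simp: ac_simps)

lemma pr_zero_K: "pr n 0 r = of_bool (r = 0)"
  unfolding pr_def by (cases r) (auto simp: prod.lessThan_Suc_shift)

lemma pr_binom:
  assumes "r \<le> K" "K \<le> n"
  shows "real ((n - r) choose (K - r)) / real (n choose K) = pr n K r"
  using assms
proof (induction r arbitrary: n K)
  case 0
  then show ?case by (simp add: pr_def)
next
  case (Suc r)
  obtain K' where K: "K = Suc K'" using Suc.prems by (cases K) auto
  obtain n' where n: "n = Suc n'" using Suc.prems K by (cases n) auto
  have IH: "real ((n' - r) choose (K' - r)) / real (n' choose K') = pr n' K' r"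
    using Suc.prems K n by (intro Suc.IH) auto
  have abs: "real K * real (n choose K) = real n * real (n' choose K')"
  proof -
    have "Suc K' * (Suc n' choose Suc K') = Suc n' * (n' choose K')" by (rule Suc_times_binomial)
    then have "real (Suc K' * (Suc n' choose Suc K')) = real (Suc n' * (n' choose K'))" by (simp only:)
    then show ?thesis using K n by (simp only: of_nat_mult)
  qed
  have Kpos: "real K > 0" using K by simp
  have b: "real (n choose K) = real n / real K * real (n' choose K')"
    using abs Kpos by (simp add: field_simps)
  have gen: "\<And>x a b c::real. x / (a / b * c) = b / a * (x / c)"
    by (simp add: divide_inverse mult.assoc mult.left_commute)
  have p: "pr n K (Suc r) = real K / real n * pr n' K' r"
    unfolding pr_def prod.lessThan_Suc_shift using K n by simp
  have eq1: "(n - Suc r) choose (K - Suc r) = (n' - r) choose (K' - r)"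
    using K n by simp
  show ?case unfolding eq1 b gen IH p ..
qed

definition ksub :: "nat \<Rightarrow> nat \<Rightarrow> nat set set" where
  "ksub n K = {A. A \<subseteq> {..<n} \<and> card A = K}"

lemma finite_ksub[simp]: "finite (ksub n K)"
  unfolding ksub_def by (rule finite_subset[of _ "Pow {..<n}"]) auto

lemma card_ksub: "card (ksub n K) = n choose K"
  unfolding ksub_def using n_subsets[of "{..<n}" K] by simp

lemma ksub_nonempty: "K \<le> n \<Longrightarrow> ksub n K \<noteq> {}"
  using card_ksub[of n K] by (auto simp: zero_less_binomial_iff)

definition U :: "nat \<Rightarrow> nat \<Rightarrow> nat set pmf" where
  "U n K = pmf_of_set (ksub n K)"

lemma set_pmf_U: "K \<le> n \<Longrightarrow> set_pmf (U n K) = ksub n K"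
  unfolding U_def by (simp add: ksub_nonempty)

lemma U_zero: "U n 0 = return_pmf {}"
proof -
  have "ksub n 0 = {{}}" unfolding ksub_def
    by (auto, metis card_0_eq finite_lessThan finite_subset empty_iff)
  then show ?thesis unfolding U_def by (simp add: pmf_of_set_singleton)
qed

lemma count_supsets:
  assumes R: "R \<subseteq> {..<n}" and rK: "card R \<le> K"
  shows "card {A \<in> ksub n K. R \<subseteq> A} = (n - card R) choose (K - card R)"
proof -
  have fR: "finite R" using R finite_subset by blast
  have "bij_betw (\<lambda>A. A - R) {A \<in> ksub n K. R \<subseteq> A} {B. B \<subseteq> {..<n} - R \<and> card B = K - card R}"
  proof (rule bij_betw_byWitness[where f' = "\<lambda>B. B \<union> R"])
    show "\<forall>A\<in>{A \<in> ksub n K. R \<subseteq> A}. A - R \<union> R = A" by auto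
    show "\<forall>B\<in>{B. B \<subseteq> {..<n} - R \<and> card B = K - card R}. B \<union> R - R = B" by auto
    show "(\<lambda>A. A - R) ` {A \<in> ksub n K. R \<subseteq> A} \<subseteq> {B. B \<subseteq> {..<n} - R \<and> card B = K - card R}"
      using fR by (auto simp: ksub_def card_Diff_subset)
    show "(\<lambda>B. B \<union> R) ` {B. B \<subseteq> {..<n} - R \<and> card B = K - card R} \<subseteq> {A \<in> ksub n K. R \<subseteq> A}"
    proof (rule image_subsetI)
      fix B assume "B \<in> {B. B \<subseteq> {..<n} - R \<and> card B = K - card R}"
      then have B: "B \<subseteq> {..<n} - R" "card B = K - card R" by auto
      have fB: "finite B" using B finite_subset by blast
      have "card (B \<union> R) = card B + card R" using B fB fR by (intro card_Un_disjoint) auto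
      then show "B \<union> R \<in> {A \<in> ksub n K. R \<subseteq> A}" using B R rK by (auto simp: ksub_def)
    qed
  qed
  then have "card {A \<in> ksub n K. R \<subseteq> A} = card {B. B \<subseteq> {..<n} - R \<and> card B = K - card R}"
    by (rule bij_betw_same_card)
  also have "\<dots> = card ({..<n} - R) choose (K - card R)"
    by (rule n_subsets) simp
  also have "card ({..<n} - R) = n - card R" using R fR by (simp add: card_Diff_subset)
  finally show ?thesis .
qed

lemma U_indicator:
  assumes R: "R \<subseteq> {..<n}" and K: "K \<le> n"
  shows "measure_pmf.expectation (U n K) (\<lambda>A. of_bool (R \<subseteq> A)) = pr n K (card R)"
proof -
  have fR: "finite R" using R finite_subset by blast
  have "measure_pmf.expectation (U n K) (\<lambda>A. of_bool (R \<subseteq> A)) =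
      (\<Sum>A\<in>ksub n K. of_bool (R \<subseteq> A)) / card (ksub n K)"
    unfolding U_def using ksub_nonempty[OF K] by (simp add: integral_pmf_of_set)
  also have "(\<Sum>A\<in>ksub n K. of_bool (R \<subseteq> A) :: real) = real (card {A \<in> ksub n K. R \<subseteq> A})"
  proof -
    have "ksub n K \<inter> Collect ((\<subseteq>) R) = {A \<in> ksub n K. R \<subseteq> A}" by blast
    then show ?thesis by (simp add: sum.If_cases of_bool_def)
  qed
  finally have e: "measure_pmf.expectation (U n K) (\<lambda>A. of_bool (R \<subseteq> A)) =
      real (card {A \<in> ksub n K. R \<subseteq> A}) / real (card (ksub n K))" .
  show ?thesis
  proof (cases "card R \<le> K")
    case True
    then show ?thesis using e count_supsets[OF R True] pr_binom[OF True K] by (simp add: card_ksub)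
  next
    case False
    have "{A \<in> ksub n K. R \<subseteq> A} = {}"
    proof (rule ccontr)
      assume "{A \<in> ksub n K. R \<subseteq> A} \<noteq> {}"
      then obtain A where A: "A \<subseteq> {..<n}" "card A = K" "R \<subseteq> A" by (auto simp: ksub_def)
      have "finite A" using A(1) finite_subset by blast
      then have "card R \<le> card A" using A(3) by (rule card_mono)
      then show False using False A(2) by simp
    qed
    moreover have "pr n K (card R) = 0"
      unfolding pr_def using False by (intro prod_zero) (auto intro!: bexI[of _ K])
    ultimately show ?thesis using e by simp
  qed
qed

lemma union_image:
  assumes A: "A \<in> ksub n K"
  shows "(\<lambda>B. A \<union> B) ` {B. B \<subseteq> {..<n} - A \<and> card B = m} = {C \<in> ksub n (K + m). A \<subseteq> C}"
proof -
  have fA: "finite A" using A by (auto simp: ksub_def intro: finite_subset)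
  show ?thesis
  proof (intro equalityI subsetI)
    fix C assume "C \<in> (\<lambda>B. A \<union> B) ` {B. B \<subseteq> {..<n} - A \<and> card B = m}"
    then obtain B where B: "B \<subseteq> {..<n} - A" "card B = m" "C = A \<union> B" by auto
    have fB: "finite B" using B finite_subset by blast
    have "card (A \<union> B) = card A + card B" using B fB fA by (intro card_Un_disjoint) auto
    then show "C \<in> {C \<in> ksub n (K + m). A \<subseteq> C}" using A B by (auto simp: ksub_def)
  next
    fix C assume C: "C \<in> {C \<in> ksub n (K + m). A \<subseteq> C}"
    have fC: "finite C" using C by (auto simp: ksub_def intro: finite_subset)
    have "card (C - A) = m" using C A fA by (auto simp: ksub_def card_Diff_subset)
    moreover have "C = A \<union> (C - A)" using C by auto
    ultimately show "C \<in> (\<lambda>B. A \<union> B) ` {B. B \<subseteq> {..<n} - A \<and> card B = m}"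
      using C by (auto simp: ksub_def)
  qed
qed

lemma step_pmf:
  assumes Km: "K + m \<le> n"
  shows "bind_pmf (U n K) (\<lambda>A. map_pmf (\<lambda>B. A \<union> B) (pmf_of_set {B. B \<subseteq> {..<n} - A \<and> card B = m}))
         = U n (K + m)"
proof (rule pmf_eqI)
  fix C
  define BA where "BA A = {B. B \<subseteq> {..<n} - A \<and> card B = m}" for A
  have cardBA: "card (BA A) = (n - K) choose m" if "A \<in> ksub n K" for A
  proof -
    have fA: "finite A" using that by (auto simp: ksub_def intro: finite_subset)
    have "card (BA A) = card ({..<n} - A) choose m" unfolding BA_def by (rule n_subsets) simp
    also have "card ({..<n} - A) = n - K" using that fA by (auto simp: ksub_def card_Diff_subset)
    finally show ?thesis .
  qed
  have BAne: "BA A \<noteq> {}" "finite (BA A)" if "A \<in> ksub n K" for A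
  proof -
    show "finite (BA A)" unfolding BA_def by (rule finite_subset[of _ "Pow {..<n}"]) auto
    have "(n - K) choose m > 0" using Km by (simp add: zero_less_binomial_iff)
    then show "BA A \<noteq> {}" using cardBA[OF that] by auto
  qed
  have inj: "inj_on (\<lambda>B. A \<union> B) (BA A)" for A
    unfolding BA_def by (rule inj_onI) blast
  have pm: "pmf (map_pmf (\<lambda>B. A \<union> B) (pmf_of_set (BA A))) C =
       of_bool (C \<in> ksub n (K + m) \<and> A \<subseteq> C) / real ((n - K) choose m)" if A: "A \<in> ksub n K" for A
  proof -
    have m: "map_pmf (\<lambda>B. A \<union> B) (pmf_of_set (BA A)) = pmf_of_set ((\<lambda>B. A \<union> B) ` BA A)"
      using inj BAne[OF A] by (intro map_pmf_of_set_inj) auto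
    have c: "card ((\<lambda>B. A \<union> B) ` BA A) = (n - K) choose m"
      using inj cardBA[OF A] by (simp add: card_image)
    have ne: "(\<lambda>B. A \<union> B) ` BA A \<noteq> {}" "finite ((\<lambda>B. A \<union> B) ` BA A)" using BAne[OF A] by auto
    have e: "(\<lambda>B. A \<union> B) ` BA A = {C \<in> ksub n (K + m). A \<subseteq> C}"
      unfolding BA_def by (rule union_image[OF A])
    show ?thesis unfolding m pmf_of_set[OF ne] c using e by (simp add: indicator_def)
  qed
  have Kn: "K \<le> n" using Km by simp
  have "pmf (bind_pmf (U n K) (\<lambda>A. map_pmf (\<lambda>B. A \<union> B) (pmf_of_set (BA A)))) C =
      (\<Sum>A\<in>ksub n K. of_bool (C \<in> ksub n (K + m) \<and> A \<subseteq> C) / real ((n - K) choose m)) / real (card (ksub n K))"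
    unfolding U_def using ksub_nonempty[OF Kn] pm
    by (simp add: pmf_bind_pmf_of_set)
  also have "\<dots> = of_bool (C \<in> ksub n (K + m)) / real (n choose (K + m))"
  proof (cases "C \<in> ksub n (K + m)")
    case False
    then show ?thesis by simp
  next
    case True
    have fC: "finite C" using True by (auto simp: ksub_def intro: finite_subset)
    have "(\<Sum>A\<in>ksub n K. of_bool (C \<in> ksub n (K + m) \<and> A \<subseteq> C) / real ((n - K) choose m))
        = real (card {A \<in> ksub n K. A \<subseteq> C}) / real ((n - K) choose m)"
      using True by (simp add: sum_divide_distrib[symmetric] sum.If_cases Int_def)
    also have "{A \<in> ksub n K. A \<subseteq> C} = {A. A \<subseteq> C \<and> card A = K}"
      using True by (auto simp: ksub_def)
    also have "card \<dots> = (K + m) choose K"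
      using n_subsets[OF fC, of K] True by (simp add: ksub_def)
    finally have s: "(\<Sum>A\<in>ksub n K. of_bool (C \<in> ksub n (K + m) \<and> A \<subseteq> C) / real ((n - K) choose m))
        = real ((K + m) choose K) / real ((n - K) choose m)" .
    have cm: "(n choose (K + m)) * ((K + m) choose K) = (n choose K) * ((n - K) choose m)"
      using choose_mult[of K "K + m" n] Km by simp
    then have cmr: "real (n choose (K + m)) * real ((K + m) choose K) = real (n choose K) * real ((n - K) choose m)"
      by (metis of_nat_mult)
    have p1: "real (n choose K) > 0" "real ((n - K) choose m) > 0" "real (n choose (K+m)) > 0"
      using Km by (auto simp: zero_less_binomial_iff)
    have alg: "\<And>a b c d::real. b > 0 \<Longrightarrow> c > 0 \<Longrightarrow> d > 0 \<Longrightarrow> d * a = c * b \<Longrightarrow> a / b / c = 1 / d"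
    proof -
      fix a b c d :: real assume h: "b > 0" "c > 0" "d > 0" "d * a = c * b"
      then have "a = c * b / d" by (simp add: field_simps)
      then show "a / b / c = 1 / d" using h by simp
    qed
    have "real ((K + m) choose K) / real ((n - K) choose m) / real (n choose K) = 1 / real (n choose (K + m))"
      using p1 cmr by (intro alg) auto
    then show ?thesis using True s by (simp add: card_ksub)
  qed
  also have "\<dots> = pmf (U n (K + m)) C"
    unfolding U_def using ksub_nonempty[OF Km] by (simp add: card_ksub indicator_def)
  finally show "pmf (bind_pmf (U n K) (\<lambda>A. map_pmf (\<lambda>B. A \<union> B) (pmf_of_set {B. B \<subseteq> {..<n} - A \<and> card B = m}))) C
         = pmf (U n (K + m)) C" unfolding BA_def .
qed

lemma rollout_marg:
  assumes "k 0 = 0" "\<forall>t<T. k t \<le> k (Suc t)" "k T \<le> n" "t \<le> T"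
  shows "map_pmf (\<lambda>Z. Z t) (rollout n k T) = U n (k t)"
  using assms
proof (induction T arbitrary: t)
  case 0
  then show ?case by (simp add: U_zero)
next
  case (Suc T)
  have hyp: "\<forall>t<T. k t \<le> k (Suc t)" "k T \<le> n" using Suc.prems by auto
  show ?case
  proof (cases "t \<le> T")
    case True
    have "map_pmf (\<lambda>Z. Z t) (rollout n k (Suc T)) = map_pmf (\<lambda>Z. Z t) (rollout n k T)"
      using True by (simp add: map_bind_pmf map_pmf_comp map_pmf_const) (simp add: map_pmf_def)
    then show ?thesis using Suc.IH[OF Suc.prems(1) hyp True] by simp
  next
    case False
    then have t: "t = Suc T" using Suc.prems by simp
    have "map_pmf (\<lambda>Z. Z t) (rollout n k (Suc T)) =
      bind_pmf (rollout n k T) (\<lambda>Z. map_pmf (\<lambda>B. Z T \<union> B)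
         (pmf_of_set {B. B \<subseteq> {..<n} - Z T \<and> card B = k (Suc T) - k T}))"
      unfolding rollout.simps map_bind_pmf map_return_pmf using t by (simp add: map_pmf_def)
    also have "\<dots> = bind_pmf (map_pmf (\<lambda>Z. Z T) (rollout n k T)) (\<lambda>A. map_pmf (\<lambda>B. A \<union> B)
         (pmf_of_set {B. B \<subseteq> {..<n} - A \<and> card B = k (Suc T) - k T}))"
      by (simp add: bind_map_pmf)
    also have "\<dots> = U n (k T + (k (Suc T) - k T))"
      using Suc.IH[OF Suc.prems(1) hyp order.refl] Suc.prems by (simp add: step_pmf)
    also have "k T + (k (Suc T) - k T) = k t" using Suc.prems t by simp
    finally show ?thesis .
  qed
qed

lemma intU: "K \<le> n \<Longrightarrow> integrable (measure_pmf (U n K)) (h :: nat set \<Rightarrow> real)"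
  by (rule integrable_measure_pmf_finite) (simp add: set_pmf_U)

lemma pr_01:
  assumes "R \<subseteq> {..<n}" "K \<le> n"
  shows "0 \<le> pr n K (card R)" "pr n K (card R) \<le> 1"
proof -
  have e: "pr n K (card R) = measure_pmf.expectation (U n K) (\<lambda>A. of_bool (R \<subseteq> A))"
    using U_indicator[OF assms] by simp
  show "0 \<le> pr n K (card R)" unfolding e by (rule integral_nonneg_AE) simp
  show "pr n K (card R) \<le> 1" unfolding e
    by (rule measure_pmf.integral_le_const) (auto intro: intU assms)
qed

lemma xy_bound:
  fixes K n a i :: real
  assumes "0 \<le> a" "0 \<le> i" "a + i < K" "K \<le> n" "2 * i \<le> K"
  shows "0 \<le> (K - i) / (n - i) - (K - a - i) / (n - a - i)"
    and "(K - i) / (n - i) - (K - a - i) / (n - a - i) \<le> 2 * a / K"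
proof -
  have p1: "n - i > 0" "n - a - i > 0" using assms by auto
  have eq: "(K - i) / (n - i) - (K - a - i) / (n - a - i) = (a / (n - i)) * ((n - K) / (n - a - i))"
    using p1 by (simp add: field_simps)
  have q: "0 \<le> (n - K) / (n - a - i)" "(n - K) / (n - a - i) \<le> 1" using p1 assms by auto
  have r: "0 \<le> a / (n - i)" using p1 assms by auto
  show "0 \<le> (K - i) / (n - i) - (K - a - i) / (n - a - i)" unfolding eq by (rule mult_nonneg_nonneg[OF r q(1)])
  have "(a / (n - i)) * ((n - K) / (n - a - i)) \<le> a / (n - i)"
    using q r mult_left_mono[OF q(2) r] by simp
  also have "a / (n - i) \<le> a / (K / 2)"
    using assms p1 by (intro divide_left_mono) auto
  also have "\<dots> = 2 * a / K" by simp
  finally show "(K - i) / (n - i) - (K - a - i) / (n - a - i) \<le> 2 * a / K" unfolding eq .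
qed

lemma pr_cov_alg:
  assumes ab: "a \<le> beta" "b \<le> beta" and K: "2 * beta \<le> K" "K \<le> n" and beta: "1 \<le> beta"
  shows "\<bar>pr n K (a + b) - pr n K a * pr n K b\<bar> \<le> 2 * real beta ^ 2 / real K"
proof -
  define x where "x i = (real K - real i) / (real n - real i)" for i
  define y where "y i = (real K - real a - real i) / (real n - real a - real i)" for i
  have Kpos: "real K > 0" using K beta by simp
  have pra: "pr n K a = (\<Prod>i<a. x i)" unfolding pr_def x_def ..
  have prb: "pr n K b = (\<Prod>i<b. x i)" unfolding pr_def x_def ..
  have prab: "pr n K (a + b) = pr n K a * (\<Prod>i<b. y i)"
    unfolding pr_def prod_lessThan_add_split y_def by (simp add: algebra_simps)
  have x01: "0 \<le> x i \<and> x i \<le> 1" if "i < beta" for i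
    using that K unfolding x_def by (auto simp: divide_le_eq_1)
  have y01: "0 \<le> y i \<and> y i \<le> 1" if "i < beta" for i
    using that K ab unfolding y_def by (auto simp: divide_le_eq_1)
  have "0 \<le> pr n K a" "pr n K a \<le> 1" unfolding pra using x01 ab
    by (auto intro!: prod_nonneg prod_le_1)
  then have pa: "\<bar>pr n K a\<bar> \<le> 1" by simp
  have "\<bar>(\<Prod>i<b. y i) - (\<Prod>i<b. x i)\<bar> \<le> (\<Sum>i<b. \<bar>y i - x i\<bar>)"
    using norm_prod_diff[of "{..<b}" y x] x01 y01 ab by (auto simp: real_norm_def)
  also have "\<dots> \<le> (\<Sum>i<b. 2 * real beta / real K)"
  proof (intro sum_mono)
    fix i assume i: "i \<in> {..<b}"
    have "x i - y i \<le> 2 * real a / real K" "0 \<le> x i - y i"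
      unfolding x_def y_def using i ab K by (intro xy_bound; simp)+
    moreover have "2 * real a / real K \<le> 2 * real beta / real K"
      using ab Kpos by (simp add: divide_right_mono)
    ultimately show "\<bar>y i - x i\<bar> \<le> 2 * real beta / real K" by simp
  qed
  also have "\<dots> = real b * (2 * real beta / real K)" by simp
  also have "\<dots> \<le> real beta * (2 * real beta / real K)"
    using ab Kpos by (intro mult_right_mono) auto
  also have "\<dots> = 2 * real beta ^ 2 / real K" by (simp add: power2_eq_square)
  finally have d: "\<bar>(\<Prod>i<b. y i) - (\<Prod>i<b. x i)\<bar> \<le> 2 * real beta ^ 2 / real K" .
  have "\<bar>pr n K (a + b) - pr n K a * pr n K b\<bar> = \<bar>pr n K a\<bar> * \<bar>(\<Prod>i<b. y i) - (\<Prod>i<b. x i)\<bar>"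
    unfolding prab prb by (simp add: abs_mult[symmetric] algebra_simps)
  also have "\<dots> \<le> 1 * (2 * real beta ^ 2 / real K)"
    using pa d by (intro mult_mono) auto
  finally show ?thesis by simp
qed

definition cov :: "nat \<Rightarrow> nat \<Rightarrow> nat set \<Rightarrow> nat set \<Rightarrow> real" where
  "cov n K S S' = pr n K (card (S \<union> S')) - pr n K (card S) * pr n K (card S')"

lemma cov_bound:
  assumes S: "S \<subseteq> {..<n}" "S' \<subseteq> {..<n}" "card S \<le> beta" "card S' \<le> beta"
    and K: "K \<le> n" and beta: "1 \<le> beta"
  shows "\<bar>cov n K S S'\<bar> \<le> of_bool (S \<inter> S' \<noteq> {}) + 2 * real beta ^ 2 / real K"
proof -
  have p: "0 \<le> pr n K (card R)" "pr n K (card R) \<le> 1" if "R \<subseteq> {..<n}" for R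
    using pr_01[OF that K] by auto
  have SS': "S \<union> S' \<subseteq> {..<n}" using S by auto
  have c1: "\<bar>cov n K S S'\<bar> \<le> 1"
  proof -
    have "0 \<le> pr n K (card S) * pr n K (card S')" "pr n K (card S) * pr n K (card S') \<le> 1"
      using p[OF S(1)] p[OF S(2)] by (auto intro: mult_le_one)
    then show ?thesis unfolding cov_def using p[OF SS'] by (simp add: abs_le_iff)
  qed
  have nn: "0 \<le> 2 * real beta ^ 2 / real K" by simp
  show ?thesis
  proof (cases "S \<inter> S' \<noteq> {}")
    case True
    then have "of_bool (S \<inter> S' \<noteq> {}) = (1::real)" by simp
    then show ?thesis using c1 nn by linarith
  next
    case False
    have fS: "finite S" "finite S'" using S finite_subset by auto
    have cu: "card (S \<union> S') = card S + card S'" using False fS by (simp add: card_Un_disjoint)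
    consider "K = 0" | "0 < K" "K < 2 * beta" | "2 * beta \<le> K" by linarith
    then show ?thesis
    proof cases
      case 1
      then show ?thesis unfolding cov_def cu by (simp add: pr_zero_K)
    next
      case 2
      have "real K < 2 * real beta" using 2 by linarith
      also have "\<dots> \<le> 2 * real beta ^ 2" using beta by (simp add: power2_eq_square)
      finally have "1 \<le> 2 * real beta ^ 2 / real K" using 2 by (simp add: field_simps)
      then show ?thesis using c1 by simp
    next
      case 3
      show ?thesis unfolding cov_def cu using pr_cov_alg[OF S(3,4) 3 K beta] by simp
    qed
  qed
qed

definition Mf :: "nat \<Rightarrow> (nat \<times> nat) set \<Rightarrow> nat \<Rightarrow> (nat \<Rightarrow> nat set \<Rightarrow> real) \<Rightarrow> nat set \<Rightarrow> real" where
  "Mf n E beta c A = (1 / real n) * (\<Sum>p\<in>Sigma {..<n} (small_subsets E beta). c (fst p) (snd p) * of_bool (snd p \<subseteq> A))"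

lemma sum_Sigma_fs:
  "finite A \<Longrightarrow> (\<And>i. i \<in> A \<Longrightarrow> finite (B i)) \<Longrightarrow>
   (\<Sum>q\<in>Sigma A B. h (fst q) (snd q)) = (\<Sum>i\<in>A. \<Sum>s\<in>B i. h i s)"
  by (simp add: sum.Sigma split_beta)

context
  fixes n :: nat and E :: "(nat \<times> nat) set" and beta :: nat and c :: "nat \<Rightarrow> nat set \<Rightarrow> real"
  assumes E: "E \<subseteq> {..<n} \<times> {..<n}"
begin

lemma in_nbhd_sub: "in_nbhd E i \<subseteq> {..<n}"
  using E by (auto simp: in_nbhd_def)

lemma finite_in_nbhd: "finite (in_nbhd E i)"
  using in_nbhd_sub finite_subset by blast

lemma finite_small: "finite (small_subsets E beta i)"
  unfolding small_subsets_def
  by (rule finite_subset[of _ "Pow (in_nbhd E i)"]) (auto simp: finite_in_nbhd)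

lemma small_sub: "S \<in> small_subsets E beta i \<Longrightarrow> S \<subseteq> {..<n} \<and> card S \<le> beta \<and> finite S"
  unfolding small_subsets_def using in_nbhd_sub finite_in_nbhd finite_subset by blast

lemma finite_P: "finite (Sigma {..<n} (small_subsets E beta))"
  by (auto intro: finite_small)

lemma card_small_le_deg:
  assumes "i < n" "S \<in> small_subsets E beta i"
  shows "card S \<le> max_degree n E"
proof -
  have "card S \<le> card (in_nbhd E i)"
    using assms(2) by (auto simp: small_subsets_def intro: card_mono finite_in_nbhd)
  also have "\<dots> \<le> Max ((\<lambda>i. card (in_nbhd E i)) ` {..<n})"
    using assms(1) by (intro Max_ge) auto
  also have "\<dots> \<le> max_degree n E" unfolding max_degree_def by simp
  finally show ?thesis .
qed

lemma card_out_le_deg: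
  assumes "j < n"
  shows "card (out_nbhd E j) \<le> max_degree n E"
proof -
  have "card (out_nbhd E j) \<le> Max ((\<lambda>i. card (out_nbhd E i)) ` {..<n})"
    using assms by (intro Max_ge) auto
  also have "\<dots> \<le> max_degree n E" unfolding max_degree_def by simp
  finally show ?thesis .
qed

lemma row_le_Ymax:
  assumes "i < n"
  shows "(\<Sum>S\<in>small_subsets E beta i. \<bar>c i S\<bar>) \<le> Y_max n E beta c"
  unfolding Y_max_def using assms by (intro Max_ge) auto

lemma Ymax_nonneg: "0 < n \<Longrightarrow> 0 \<le> Y_max n E beta c"
  using row_le_Ymax[of 0] by (meson order.trans sum_nonneg abs_ge_zero)

lemma sum_abs_P: "(\<Sum>p\<in>Sigma {..<n} (small_subsets E beta). \<bar>c (fst p) (snd p)\<bar>) \<le> real n * Y_max n E beta c"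
proof -
  have "(\<Sum>p\<in>Sigma {..<n} (small_subsets E beta). \<bar>c (fst p) (snd p)\<bar>) =
        (\<Sum>i<n. \<Sum>S\<in>small_subsets E beta i. \<bar>c i S\<bar>)"
    by (rule sum_Sigma_fs[of _ _ "\<lambda>i S. \<bar>c i S\<bar>"]) (auto intro: finite_small)
  also have "\<dots> \<le> (\<Sum>i<n. Y_max n E beta c)" by (intro sum_mono row_le_Ymax) auto
  finally show ?thesis by simp
qed

lemma overlap_inner:
  assumes i: "i < n" and S: "S \<in> small_subsets E beta i"
  shows "(\<Sum>q\<in>Sigma {..<n} (small_subsets E beta). \<bar>c (fst q) (snd q)\<bar> * of_bool (S \<inter> snd q \<noteq> {}))
         \<le> real (max_degree n E) ^ 2 * Y_max n E beta c"
proof -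
  define D where "D = max_degree n E"
  define Ov where "Ov = {i'\<in>{..<n}. S \<inter> in_nbhd E i' \<noteq> {}}"
  have Ysum: "0 \<le> (\<Sum>S'\<in>small_subsets E beta i'. \<bar>c i' S'\<bar>)" for i' by (simp add: sum_nonneg)
  have "(\<Sum>q\<in>Sigma {..<n} (small_subsets E beta). \<bar>c (fst q) (snd q)\<bar> * of_bool (S \<inter> snd q \<noteq> {}))
      = (\<Sum>i'<n. \<Sum>S'\<in>small_subsets E beta i'. \<bar>c i' S'\<bar> * of_bool (S \<inter> S' \<noteq> {}))"
    by (rule sum_Sigma_fs[of _ _ "\<lambda>i S'. \<bar>c i S'\<bar> * of_bool (S \<inter> S' \<noteq> {})"]) (auto intro: finite_small)
  also have "\<dots> \<le> (\<Sum>i'<n. of_bool (i' \<in> Ov) * (\<Sum>S'\<in>small_subsets E beta i'. \<bar>c i' S'\<bar>))"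
  proof (intro sum_mono)
    fix i' assume i': "i' \<in> {..<n}"
    show "(\<Sum>S'\<in>small_subsets E beta i'. \<bar>c i' S'\<bar> * of_bool (S \<inter> S' \<noteq> {}))
          \<le> of_bool (i' \<in> Ov) * (\<Sum>S'\<in>small_subsets E beta i'. \<bar>c i' S'\<bar>)"
    proof (cases "i' \<in> Ov")
      case True
      then show ?thesis by (simp add: sum_mono)
    next
      case False
      then have "S \<inter> S' = {}" if "S' \<in> small_subsets E beta i'" for S'
        using that i' unfolding Ov_def small_subsets_def by auto
      then show ?thesis using False by simp
    qed
  qed
  also have "\<dots> \<le> (\<Sum>i'<n. of_bool (i' \<in> Ov) * Y_max n E beta c)"
    by (intro sum_mono mult_left_mono row_le_Ymax) auto
  also have "\<dots> = real (card Ov) * Y_max n E beta c"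
    by (simp add: sum_distrib_right[symmetric] Ov_def sum.If_cases Int_def of_bool_def)
  also have "real (card Ov) \<le> real D ^ 2"
  proof -
    have "Ov \<subseteq> (\<Union>j\<in>S. out_nbhd E j)"
      unfolding Ov_def in_nbhd_def out_nbhd_def by auto
    then have "card Ov \<le> card (\<Union>j\<in>S. out_nbhd E j)"
      using S E by (intro card_mono) (auto simp: out_nbhd_def intro: finite_subset[of _ "{..<n}"] dest: small_sub)
    also have "\<dots> \<le> (\<Sum>j\<in>S. card (out_nbhd E j))" by (rule card_UN_le) (use small_sub[OF S] in auto)
    also have "\<dots> \<le> (\<Sum>j\<in>S. D)" using small_sub[OF S] unfolding D_def
      by (intro sum_mono card_out_le_deg) auto
    also have "\<dots> = card S * D" by simp
    also have "\<dots> \<le> D * D" using card_small_le_deg[OF i S] unfolding D_def by simp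
    finally show ?thesis by (simp add: power2_eq_square) (metis of_nat_le_iff of_nat_mult)
  qed
  then have "real (card Ov) * Y_max n E beta c \<le> real D ^ 2 * Y_max n E beta c"
    using Ymax_nonneg i by (intro mult_right_mono) auto
  finally show ?thesis unfolding D_def .
qed

end

context
  fixes n :: nat and E :: "(nat \<times> nat) set" and beta :: nat and c :: "nat \<Rightarrow> nat set \<Rightarrow> real"
  assumes E: "E \<subseteq> {..<n} \<times> {..<n}"
begin

lemma var_U:
  assumes n: "0 < n" and beta: "1 \<le> beta" and K: "K \<le> n"
  shows "measure_pmf.expectation (U n K) (\<lambda>A. (Mf n E beta c A - measure_pmf.expectation (U n K) (Mf n E beta c))\<^sup>2)
     \<le> Y_max n E beta c ^ 2 * real (max_degree n E) ^ 2 / real n + 2 * real beta ^ 2 * Y_max n E beta c ^ 2 / real K"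
proof -
  define P where "P = Sigma {..<n} (small_subsets E beta)"
  define cp where "cp (p::nat \<times> nat set) = c (fst p) (snd p)" for p
  define Ip where "Ip (p::nat \<times> nat set) (A::nat set) = (of_bool (snd p \<subseteq> A) :: real)" for p A
  define \<pi> where "\<pi> (p::nat \<times> nat set) = pr n K (card (snd p))" for p
  define g where "g (p::nat \<times> nat set) (A::nat set) = Ip p A - \<pi> p" for p A
  define Ym where "Ym = Y_max n E beta c"
  define D where "D = real (max_degree n E)"
  let ?M = "measure_pmf (U n K)"
  have fP: "finite P" unfolding P_def using finite_P[OF E] .
  have Psub: "snd p \<subseteq> {..<n}" "card (snd p) \<le> beta" if "p \<in> P" for p
    using that small_sub[OF E, of "snd p" beta "fst p"] unfolding P_def by (auto simp: mem_Sigma_iff)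
  have iI: "integrable ?M h" for h :: "nat set \<Rightarrow> real" using intU[OF K] .
  have EIp: "measure_pmf.expectation (U n K) (Ip p) = \<pi> p" if "p \<in> P" for p
    unfolding Ip_def \<pi>_def using U_indicator[OF Psub(1)[OF that] K] .
  have Mf_eq: "Mf n E beta c A = (1 / real n) * (\<Sum>p\<in>P. cp p * Ip p A)" for A
    unfolding Mf_def P_def cp_def Ip_def ..
  define m where "m = (1 / real n) * (\<Sum>p\<in>P. cp p * \<pi> p)"
  have Em: "measure_pmf.expectation (U n K) (Mf n E beta c) = m"
  proof -
    have "measure_pmf.expectation (U n K) (Mf n E beta c) = (1 / real n) * measure_pmf.expectation (U n K) (\<lambda>A. \<Sum>p\<in>P. cp p * Ip p A)"
      unfolding Mf_eq by simp
    also have "measure_pmf.expectation (U n K) (\<lambda>A. \<Sum>p\<in>P. cp p * Ip p A) = (\<Sum>p\<in>P. cp p * \<pi> p)"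
    proof -
      have "measure_pmf.expectation (U n K) (\<lambda>A. \<Sum>p\<in>P. cp p * Ip p A) = (\<Sum>p\<in>P. measure_pmf.expectation (U n K) (\<lambda>A. cp p * Ip p A))"
        by (rule Bochner_Integration.integral_sum) (rule iI)
      also have "\<dots> = (\<Sum>p\<in>P. cp p * \<pi> p)" by (intro sum.cong refl) (simp add: EIp)
      finally show ?thesis .
    qed
    finally show ?thesis unfolding m_def .
  qed
  have sq: "(Mf n E beta c A - m)\<^sup>2 = (1 / real n)\<^sup>2 * (\<Sum>p\<in>P. \<Sum>q\<in>P. cp p * cp q * (g p A * g q A))" for A
  proof -
    have "Mf n E beta c A - m = (1 / real n) * (\<Sum>p\<in>P. cp p * g p A)"
      unfolding Mf_eq m_def g_def by (simp add: sum_subtractf right_diff_distrib)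
    then show ?thesis
      by (simp add: power2_eq_square sum_product algebra_simps)
  qed
  have Egg: "measure_pmf.expectation (U n K) (\<lambda>A. g p A * g q A) = cov n K (snd p) (snd q)"
    if "p \<in> P" "q \<in> P" for p q
  proof -
    have u: "snd p \<union> snd q \<subseteq> {..<n}" using Psub that by auto
    have "g p A * g q A = of_bool (snd p \<union> snd q \<subseteq> A) - \<pi> q * Ip p A - \<pi> p * Ip q A + \<pi> p * \<pi> q" for A
      unfolding g_def Ip_def by (simp add: algebra_simps)
    then have "measure_pmf.expectation (U n K) (\<lambda>A. g p A * g q A) =
      measure_pmf.expectation (U n K) (\<lambda>A. of_bool (snd p \<union> snd q \<subseteq> A) - \<pi> q * Ip p A - \<pi> p * Ip q A + \<pi> p * \<pi> q)"
      by presburger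
    also have "\<dots> = pr n K (card (snd p \<union> snd q)) - \<pi> q * \<pi> p - \<pi> p * \<pi> q + \<pi> p * \<pi> q"
      using U_indicator[OF u K] EIp that by (simp add: iI)
    finally show ?thesis unfolding cov_def \<pi>_def by simp
  qed
  have V: "measure_pmf.expectation (U n K) (\<lambda>A. (Mf n E beta c A - m)\<^sup>2) =
     (1 / real n)\<^sup>2 * (\<Sum>p\<in>P. \<Sum>q\<in>P. cp p * cp q * cov n K (snd p) (snd q))"
    unfolding sq
    by (simp add: Bochner_Integration.integral_sum iI Egg)
  have nn: "0 \<le> 2 * real beta ^ 2 / real K" by simp
  have "(\<Sum>p\<in>P. \<Sum>q\<in>P. cp p * cp q * cov n K (snd p) (snd q)) \<le>
        (\<Sum>p\<in>P. \<Sum>q\<in>P. \<bar>cp p\<bar> * \<bar>cp q\<bar> * (of_bool (snd p \<inter> snd q \<noteq> {}) + 2 * real beta ^ 2 / real K))"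
  proof (intro sum_mono)
    fix p q assume pq: "p \<in> P" "q \<in> P"
    have "cp p * cp q * cov n K (snd p) (snd q) \<le> \<bar>cp p\<bar> * \<bar>cp q\<bar> * \<bar>cov n K (snd p) (snd q)\<bar>"
      by (simp add: abs_mult[symmetric])
    also have "\<dots> \<le> \<bar>cp p\<bar> * \<bar>cp q\<bar> * (of_bool (snd p \<inter> snd q \<noteq> {}) + 2 * real beta ^ 2 / real K)"
      using cov_bound[OF Psub(1)[OF pq(1)] Psub(1)[OF pq(2)] Psub(2)[OF pq(1)] Psub(2)[OF pq(2)] K beta]
      by (intro mult_left_mono) auto
    finally show "cp p * cp q * cov n K (snd p) (snd q) \<le> \<bar>cp p\<bar> * \<bar>cp q\<bar> * (of_bool (snd p \<inter> snd q \<noteq> {}) + 2 * real beta ^ 2 / real K)" .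
  qed
  also have "\<dots> = (\<Sum>p\<in>P. \<bar>cp p\<bar> * (\<Sum>q\<in>P. \<bar>cp q\<bar> * of_bool (snd p \<inter> snd q \<noteq> {})))
        + 2 * real beta ^ 2 / real K * (\<Sum>p\<in>P. \<bar>cp p\<bar>)\<^sup>2"
    by (simp add: algebra_simps sum.distrib sum_distrib_left sum_distrib_right power2_eq_square sum_product sum_divide_distrib)
  also have "\<dots> \<le> (\<Sum>p\<in>P. \<bar>cp p\<bar> * (D ^ 2 * Ym)) + 2 * real beta ^ 2 / real K * (real n * Ym)\<^sup>2"
  proof (intro add_mono sum_mono mult_left_mono power_mono)
    fix p assume p: "p \<in> P"
    obtain i S where pe: "p = (i, S)" by fastforce
    have "i < n" "S \<in> small_subsets E beta i" using p pe unfolding P_def by auto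
    then show "(\<Sum>q\<in>P. \<bar>cp q\<bar> * of_bool (snd p \<inter> snd q \<noteq> {})) \<le> D ^ 2 * Ym"
      using overlap_inner[OF E] unfolding P_def cp_def D_def Ym_def pe by simp
  next
    show "(\<Sum>p\<in>P. \<bar>cp p\<bar>) \<le> real n * Ym" using sum_abs_P[OF E] unfolding P_def cp_def Ym_def .
  qed (auto simp: sum_nonneg)
  also have "\<dots> \<le> real n * Ym * (D ^ 2 * Ym) + 2 * real beta ^ 2 / real K * (real n * Ym)\<^sup>2"
  proof -
    have "(\<Sum>p\<in>P. \<bar>cp p\<bar> * (D ^ 2 * Ym)) = (\<Sum>p\<in>P. \<bar>cp p\<bar>) * (D ^ 2 * Ym)"
      by (simp add: sum_distrib_right)
    also have "\<dots> \<le> real n * Ym * (D ^ 2 * Ym)"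
      using sum_abs_P[OF E] Ymax_nonneg[OF E n] unfolding P_def cp_def Ym_def
      by (intro mult_right_mono) auto
    finally show ?thesis by simp
  qed
  finally have B: "(\<Sum>p\<in>P. \<Sum>q\<in>P. cp p * cp q * cov n K (snd p) (snd q))
      \<le> real n * Ym * (D ^ 2 * Ym) + 2 * real beta ^ 2 / real K * (real n * Ym)\<^sup>2" .
  have "measure_pmf.expectation (U n K) (\<lambda>A. (Mf n E beta c A - m)\<^sup>2)
     \<le> (1 / real n)\<^sup>2 * (real n * Ym * (D ^ 2 * Ym) + 2 * real beta ^ 2 / real K * (real n * Ym)\<^sup>2)"
    unfolding V by (intro mult_left_mono B) simp
  also have "\<dots> = Ym ^ 2 * D ^ 2 / real n + 2 * real beta ^ 2 * Ym ^ 2 / real K"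
    using n by (simp add: field_simps power2_eq_square)
  finally show ?thesis unfolding Em Ym_def D_def .
qed

end

abbreviation Gm :: "real measure" where "Gm \<equiv> density lborel std_normal_density"

lemma prob_Gm: "prob_space Gm" by (rule prob_space_normal_density) simp

lemma Gm_int1: "integrable Gm (\<lambda>x. x)"
  using integrable_std_normal_moment[of 1] by (subst integrable_density) auto

lemma Gm_mean: "integral\<^sup>L Gm (\<lambda>x. x) = 0"
  using integral_std_normal_moment_odd[of 0] by (subst integral_density) auto

lemma Gm_int2: "integrable Gm (\<lambda>x. x * x)"
  using integrable_std_normal_moment[of 2] by (subst integrable_density) (auto simp: power2_eq_square mult.assoc)

lemma Gm_var: "integral\<^sup>L Gm (\<lambda>x. x * x) = 1"
proof -
  have "integral\<^sup>L Gm (\<lambda>x. x * x) = integral\<^sup>L lborel (\<lambda>x. std_normal_density x * x ^ (2 * 1))"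
    by (subst integral_density) (auto simp: power2_eq_square mult.assoc)
  also have "\<dots> = 1" by (subst integral_std_normal_moment_even) (simp add: fact_numeral)
  finally show ?thesis .
qed

lemma product_Gm: "product_prob_space (\<lambda>_. Gm)"
proof -
  interpret prob_space Gm by (rule prob_Gm)
  show ?thesis by unfold_locales
qed

lemma PiG_prob: "finite I \<Longrightarrow> prob_space (PiM I (\<lambda>_. Gm))"
proof -
  assume fI: "finite I"
  interpret product_prob_space "\<lambda>_. Gm" I by (rule product_Gm)
  interpret finite_product_prob_space "\<lambda>_. Gm" I by unfold_locales (rule fI)
  show ?thesis by unfold_locales
qed

lemma PiG_mom:
  assumes fI: "finite I" and a: "a \<in> I" and b: "b \<in> I"
  shows "integrable (PiM I (\<lambda>_. Gm)) (\<lambda>\<omega>. \<omega> a * \<omega> b)"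
    and "integral\<^sup>L (PiM I (\<lambda>_. Gm)) (\<lambda>\<omega>. \<omega> a * \<omega> b) = of_bool (a = b)"
proof -
  interpret product_prob_space "\<lambda>_. Gm" I by (rule product_Gm)
  define f where "f i x = (if i = a then x else 1) * (if i = b then x else (1::real))" for i x
  have fi: "integrable Gm (f i)" for i
    unfolding f_def using Gm_int1 Gm_int2 by (cases "i = a"; cases "i = b") auto
  have eq: "(\<Prod>i\<in>I. f i (\<omega> i)) = \<omega> a * \<omega> b" for \<omega>
    unfolding f_def prod.distrib using fI a b by (simp add: prod.delta)
  have "integrable (PiM I (\<lambda>_. Gm)) (\<lambda>\<omega>. \<Prod>i\<in>I. f i (\<omega> i))"
    by (rule product_integrable_prod) (auto intro: fI fi)
  then show "integrable (PiM I (\<lambda>_. Gm)) (\<lambda>\<omega>. \<omega> a * \<omega> b)" unfolding eq .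
  have "integral\<^sup>L (PiM I (\<lambda>_. Gm)) (\<lambda>\<omega>. \<Prod>i\<in>I. f i (\<omega> i)) = (\<Prod>i\<in>I. integral\<^sup>L Gm (f i))"
    by (rule product_integral_prod) (auto intro: fI fi)
  then have "integral\<^sup>L (PiM I (\<lambda>_. Gm)) (\<lambda>\<omega>. \<omega> a * \<omega> b) = (\<Prod>i\<in>I. integral\<^sup>L Gm (f i))" unfolding eq .
  also have "\<dots> = of_bool (a = b)"
  proof (cases "a = b")
    case True
    have "integral\<^sup>L Gm (f i) = 1" for i
      unfolding f_def using True Gm_var prob_space.prob_space[OF prob_Gm] by (cases "i = a") auto
    then show ?thesis using True by simp
  next
    case False
    have "integral\<^sup>L Gm (f a) = 0" unfolding f_def using False Gm_mean by simp
    then show ?thesis using False fI a by (auto intro!: prod_zero bexI[of _ a])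
  qed
  finally show "integral\<^sup>L (PiM I (\<lambda>_. Gm)) (\<lambda>\<omega>. \<omega> a * \<omega> b) = of_bool (a = b)" .
qed

lemma PiG_mom1:
  assumes fI: "finite I" and a: "a \<in> I"
  shows "integrable (PiM I (\<lambda>_. Gm)) (\<lambda>\<omega>. \<omega> a)"
    and "integral\<^sup>L (PiM I (\<lambda>_. Gm)) (\<lambda>\<omega>. \<omega> a) = 0"
proof -
  interpret product_prob_space "\<lambda>_. Gm" I by (rule product_Gm)
  define f where "f i x = (if i = a then x else (1::real))" for i x
  have fi: "integrable Gm (f i)" for i
    unfolding f_def using Gm_int1 by (cases "i = a") auto
  have eq: "(\<Prod>i\<in>I. f i (\<omega> i)) = \<omega> a" for \<omega>
    unfolding f_def using fI a by (simp add: prod.delta)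
  have "integrable (PiM I (\<lambda>_. Gm)) (\<lambda>\<omega>. \<Prod>i\<in>I. f i (\<omega> i))"
    by (rule product_integrable_prod) (auto intro: fI fi)
  then show "integrable (PiM I (\<lambda>_. Gm)) (\<lambda>\<omega>. \<omega> a)" unfolding eq .
  have "integral\<^sup>L (PiM I (\<lambda>_. Gm)) (\<lambda>\<omega>. \<Prod>i\<in>I. f i (\<omega> i)) = (\<Prod>i\<in>I. integral\<^sup>L Gm (f i))"
    by (rule product_integral_prod) (auto intro: fI fi)
  then have "integral\<^sup>L (PiM I (\<lambda>_. Gm)) (\<lambda>\<omega>. \<omega> a) = (\<Prod>i\<in>I. integral\<^sup>L Gm (f i))" unfolding eq .
  also have "\<dots> = 0"
  proof -
    have "integral\<^sup>L Gm (f a) = 0" unfolding f_def using Gm_mean by simp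
    then show ?thesis using fI a by (auto intro!: prod_zero bexI[of _ a])
  qed
  finally show "integral\<^sup>L (PiM I (\<lambda>_. Gm)) (\<lambda>\<omega>. \<omega> a) = 0" .
qed

lemma noise_moments:
  fixes \<alpha> :: "'i \<Rightarrow> real"
  assumes fI: "finite I"
  defines "N \<equiv> (\<lambda>\<omega>. \<Sum>a\<in>I. \<alpha> a * \<omega> a)"
  shows "integrable (PiM I (\<lambda>_. Gm)) N" "integral\<^sup>L (PiM I (\<lambda>_. Gm)) N = 0"
    "integrable (PiM I (\<lambda>_. Gm)) (\<lambda>\<omega>. (N \<omega>)\<^sup>2)"
    "integral\<^sup>L (PiM I (\<lambda>_. Gm)) (\<lambda>\<omega>. (N \<omega>)\<^sup>2) = (\<Sum>a\<in>I. (\<alpha> a)\<^sup>2)"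
proof -
  let ?M = "PiM I (\<lambda>_. Gm)"
  have sq: "(N \<omega>)\<^sup>2 = (\<Sum>a\<in>I. \<Sum>b\<in>I. \<alpha> a * \<alpha> b * (\<omega> a * \<omega> b))" for \<omega>
    unfolding N_def by (simp add: power2_eq_square sum_product algebra_simps)
  show "integrable ?M N" unfolding N_def
    using PiG_mom1(1)[OF fI] by (intro Bochner_Integration.integrable_sum integrable_mult_right) auto
  show "integral\<^sup>L ?M N = 0" unfolding N_def
    using PiG_mom1[OF fI] by (subst Bochner_Integration.integral_sum) (auto intro: integrable_mult_right)
  show "integrable ?M (\<lambda>\<omega>. (N \<omega>)\<^sup>2)" unfolding sq
    using PiG_mom(1)[OF fI] by (intro Bochner_Integration.integrable_sum integrable_mult_right) auto
  have "integral\<^sup>L ?M (\<lambda>\<omega>. (N \<omega>)\<^sup>2) = (\<Sum>a\<in>I. \<Sum>b\<in>I. \<alpha> a * \<alpha> b * of_bool (a = b))"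
    unfolding sq using PiG_mom[OF fI]
    by (simp add: Bochner_Integration.integral_sum Bochner_Integration.integrable_sum integrable_mult_right)
  also have "\<dots> = (\<Sum>a\<in>I. (\<alpha> a)\<^sup>2)"
    using fI by (simp add: of_bool_def power2_eq_square if_distrib cong: if_cong)
  finally show "integral\<^sup>L ?M (\<lambda>\<omega>. (N \<omega>)\<^sup>2) = (\<Sum>a\<in>I. (\<alpha> a)\<^sup>2)" .
qed

lemma distr_pair_snd':
  assumes "prob_space M1" "sigma_finite_measure M2"
  shows "distr (M1 \<Otimes>\<^sub>M M2) M2 snd = M2"
proof (intro measure_eqI)
  interpret M1: prob_space M1 by fact
  interpret M2: sigma_finite_measure M2 by fact
  fix A assume A: "A \<in> sets (distr (M1 \<Otimes>\<^sub>M M2) M2 snd)"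
  from A have "emeasure (distr (M1 \<Otimes>\<^sub>M M2) M2 snd) A = emeasure (M1 \<Otimes>\<^sub>M M2) (space M1 \<times> A)"
    by (auto simp add: emeasure_distr space_pair_measure dest: sets.sets_into_space intro!: arg_cong2[where f=emeasure])
  with A show "emeasure (distr (M1 \<Otimes>\<^sub>M M2) M2 snd) A = emeasure M2 A"
    by (simp add: M2.emeasure_pair_measure_Times M1.emeasure_space_1)
qed simp

lemma pair_prod:
  fixes p :: "'a pmf" and f :: "'a \<Rightarrow> real" and h :: "'b \<Rightarrow> real"
  assumes M2: "prob_space M2" and fB: "\<And>x. \<bar>f x\<bar> \<le> B" and h: "integrable M2 h"
  shows "integrable (measure_pmf p \<Otimes>\<^sub>M M2) (\<lambda>\<omega>. f (fst \<omega>) * h (snd \<omega>))"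
    and "integral\<^sup>L (measure_pmf p \<Otimes>\<^sub>M M2) (\<lambda>\<omega>. f (fst \<omega>) * h (snd \<omega>)) =
         measure_pmf.expectation p f * integral\<^sup>L M2 h"
proof -
  have s1: "sigma_finite_measure (measure_pmf p)"
    by (rule prob_space_imp_sigma_finite) (rule prob_space_measure_pmf)
  have s2: "sigma_finite_measure M2" by (rule prob_space_imp_sigma_finite) (rule M2)
  interpret P: pair_sigma_finite "measure_pmf p" M2 by (rule pair_sigma_finite.intro[OF s1 s2])
  have hm[measurable]: "h \<in> borel_measurable M2" using h by auto
  have fm[measurable]: "f \<in> borel_measurable (measure_pmf p)" by simp
  have ih: "integrable (measure_pmf p \<Otimes>\<^sub>M M2) (\<lambda>\<omega>. h (snd \<omega>))"
  proof -
    have "integrable (distr (measure_pmf p \<Otimes>\<^sub>M M2) M2 snd) h"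
      using distr_pair_snd'[OF prob_space_measure_pmf[of p] s2] h by simp
    then show ?thesis by (subst (asm) integrable_distr_eq) auto
  qed
  have B: "0 \<le> B" using fB[of undefined] by linarith
  show int: "integrable (measure_pmf p \<Otimes>\<^sub>M M2) (\<lambda>\<omega>. f (fst \<omega>) * h (snd \<omega>))"
  proof (rule Bochner_Integration.integrable_bound[OF integrable_mult_right[OF ih, of B]])
    show "(\<lambda>\<omega>. f (fst \<omega>) * h (snd \<omega>)) \<in> borel_measurable (measure_pmf p \<Otimes>\<^sub>M M2)" by measurable
    show "AE \<omega> in measure_pmf p \<Otimes>\<^sub>M M2. norm (f (fst \<omega>) * h (snd \<omega>)) \<le> norm (B * h (snd \<omega>))"
      using fB B by (auto simp: abs_mult intro!: mult_right_mono)
  qed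
  have "integral\<^sup>L (measure_pmf p \<Otimes>\<^sub>M M2) (\<lambda>\<omega>. f (fst \<omega>) * h (snd \<omega>)) =
      (\<integral>x. (\<integral>y. f x * h y \<partial>M2) \<partial>measure_pmf p)"
    using P.integral_fst'[OF int] by simp
  also have "\<dots> = measure_pmf.expectation p f * integral\<^sup>L M2 h" by simp
  finally show "integral\<^sup>L (measure_pmf p \<Otimes>\<^sub>M M2) (\<lambda>\<omega>. f (fst \<omega>) * h (snd \<omega>)) =
         measure_pmf.expectation p f * integral\<^sup>L M2 h" .
qed

context
  fixes k :: "nat \<Rightarrow> nat" and beta n :: nat
  assumes kinc: "\<forall>t<beta. k t < k (Suc t)" and kn: "k beta \<le> n" and k0: "k 0 = 0" and beta: "1 \<le> beta"
begin

lemma k_mono_add: "s + d \<le> beta \<Longrightarrow> k s + d \<le> k (s + d)"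
proof (induction d)
  case 0 then show ?case by simp
next
  case (Suc d)
  then have "k s + d \<le> k (s + d)" by simp
  moreover have "k (s + d) < k (Suc (s + d))" using kinc Suc.prems by simp
  ultimately show ?case by simp
qed

lemma k_mono: "s \<le> t \<Longrightarrow> t \<le> beta \<Longrightarrow> k s \<le> k t"
  using k_mono_add[of s "t - s"] by simp

lemma k_strict: "s < t \<Longrightarrow> t \<le> beta \<Longrightarrow> k s < k t"
  using k_mono_add[of s "t - s"] by simp

lemma k_le_n: "t \<le> beta \<Longrightarrow> k t \<le> n"
  using k_mono[of t beta] kn by simp

lemma n_pos: "0 < n"
  using k_strict[of 0 beta] beta kn k0 by simp

lemma k1_pos: "0 < k 1"
  using k_strict[of 0 1] beta k0 by simp

lemma gap_pos: "1 \<le> min_gap k beta"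
proof -
  have "min_gap k beta \<in> (\<lambda>t. k t - k (t - 1)) ` {1..beta}"
    unfolding min_gap_def using beta by (intro Min_in) auto
  then obtain t where t: "t \<in> {1..beta}" "min_gap k beta = k t - k (t - 1)" by auto
  have "k (t - 1) < k t" using t(1) by (intro k_strict) auto
  then show ?thesis using t by simp
qed

lemma gap_le: "s \<noteq> t \<Longrightarrow> s \<le> beta \<Longrightarrow> t \<le> beta \<Longrightarrow> real (min_gap k beta) \<le> \<bar>real (k t) - real (k s)\<bar>"
proof -
  have main: "real (min_gap k beta) \<le> real (k t) - real (k s)" if st: "s < t" "t \<le> beta" for s t
  proof -
    have "min_gap k beta \<le> k t - k (t - 1)"
      unfolding min_gap_def using st by (intro Min_le) auto
    moreover have "k s \<le> k (t - 1)" using st by (intro k_mono) auto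
    moreover have "k (t - 1) \<le> k t" using st by (intro k_mono) auto
    ultimately have "min_gap k beta \<le> k t - k s" by linarith
    then show ?thesis using \<open>k s \<le> k (t - 1)\<close> \<open>k (t - 1) \<le> k t\<close> by (simp add: of_nat_diff)
  qed
  assume "s \<noteq> t" "s \<le> beta" "t \<le> beta"
  then consider "s < t" | "t < s" by linarith
  then show ?thesis using main \<open>s \<le> beta\<close> \<open>t \<le> beta\<close> by cases fastforce+
qed

definition xk :: "nat \<Rightarrow> real" where "xk t = real (k t) / real n"

lemma xk_inj: "inj_on xk {0..beta}"
proof (rule inj_onI)
  fix s t assume st: "s \<in> {0..beta}" "t \<in> {0..beta}" "xk s = xk t"
  show "s = t"
  proof (rule ccontr)
    assume "s \<noteq> t"
    then have "1 \<le> \<bar>real (k t) - real (k s)\<bar>" using gap_le[of s t] gap_pos st by fastforce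
    moreover have "real (k s) = real (k t)" using st(3) n_pos unfolding xk_def by (simp add: field_simps)
    ultimately show False by simp
  qed
qed

lemma lag_bound:
  assumes t: "t \<le> beta" and y: "0 \<le> y" "y \<le> 1"
  shows "\<bar>lagrange_basis xk beta t y\<bar> \<le> (real n / real (min_gap k beta)) ^ beta"
proof -
  define \<Delta> where "\<Delta> = real (min_gap k beta)"
  have D: "1 \<le> \<Delta>" using gap_pos unfolding \<Delta>_def by simp
  have np: "0 < real n" using n_pos by simp
  have fac: "\<bar>(y - xk s) / (xk t - xk s)\<bar> \<le> real n / \<Delta>" if s: "s \<in> {0..beta} - {t}" for s
  proof -
    have xs: "0 \<le> xk s" "xk s \<le> 1" unfolding xk_def using k_le_n[of s] s np by auto
    have num: "\<bar>y - xk s\<bar> \<le> 1" using xs y by auto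
    have "\<Delta> \<le> \<bar>real (k t) - real (k s)\<bar>" unfolding \<Delta>_def using s t by (intro gap_le) auto
    moreover have "\<bar>xk t - xk s\<bar> = \<bar>real (k t) - real (k s)\<bar> / real n"
      unfolding xk_def using np by (simp add: diff_divide_distrib[symmetric])
    ultimately have den: "\<Delta> / real n \<le> \<bar>xk t - xk s\<bar>" using np by (simp add: divide_right_mono)
    have dp: "0 < \<Delta> / real n" using D np by simp
    have ap: "0 < \<bar>xk t - xk s\<bar>" using den dp by linarith
    have "\<bar>(y - xk s) / (xk t - xk s)\<bar> = \<bar>y - xk s\<bar> / \<bar>xk t - xk s\<bar>" by (simp add: abs_divide)
    also have "\<dots> \<le> 1 / \<bar>xk t - xk s\<bar>" using num by (intro divide_right_mono) auto
    also have "\<dots> \<le> 1 / (\<Delta> / real n)" using den dp ap mult_pos_pos[OF ap dp] by (intro divide_left_mono) auto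
    also have "\<dots> = real n / \<Delta>" by simp
    finally show ?thesis .
  qed
  have "\<bar>lagrange_basis xk beta t y\<bar> = (\<Prod>s\<in>{0..beta} - {t}. \<bar>(y - xk s) / (xk t - xk s)\<bar>)"
    unfolding lagrange_basis_def by (simp add: abs_prod)
  also have "\<dots> \<le> (\<Prod>s\<in>{0..beta} - {t}. real n / \<Delta>)"
  proof (rule prod_mono)
    fix s assume "s \<in> {0..beta} - {t}"
    then show "0 \<le> \<bar>(y - xk s) / (xk t - xk s)\<bar> \<and> \<bar>(y - xk s) / (xk t - xk s)\<bar> \<le> real n / \<Delta>"
      using fac[of s] by simp
  qed
  also have "\<dots> = (real n / \<Delta>) ^ beta" using t by (simp add: card_Diff_singleton)
  finally show ?thesis unfolding \<Delta>_def .
qed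

definition wk :: "nat \<Rightarrow> real" where "wk t = lagrange_basis xk beta t 1 - lagrange_basis xk beta t 0"

lemma wk_sq: "t \<le> beta \<Longrightarrow> (wk t)\<^sup>2 \<le> 4 * (real n / real (min_gap k beta)) ^ (2 * beta)"
proof -
  assume t: "t \<le> beta"
  define q where "q = (real n / real (min_gap k beta)) ^ beta"
  have "\<bar>wk t\<bar> \<le> 2 * q" unfolding wk_def q_def
    using lag_bound[OF t, of 1] lag_bound[OF t, of 0] by simp
  then have "(wk t)\<^sup>2 \<le> (2 * q)\<^sup>2" by (metis abs_ge_zero power2_abs power_mono)
  also have "\<dots> = 4 * q\<^sup>2" by (simp add: power_mult_distrib)
  also have "q\<^sup>2 = (real n / real (min_gap k beta)) ^ (2 * beta)"
    unfolding q_def by (simp add: power_mult[symmetric] mult.commute)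
  finally show ?thesis .
qed

lemma interp_pr:
  assumes r: "r \<le> beta" "r \<le> n"
  shows "(\<Sum>t\<in>{0..beta}. wk t * pr n (k t) r) = of_bool (r \<noteq> 0)"
proof -
  define Q where "Q = (\<Prod>i<r. [:- real i / (real n - real i), real n / (real n - real i):])"
  have np: "0 < real n" using n_pos by simp
  have pQ: "poly Q y = (\<Prod>i<r. (real n * y - real i) / (real n - real i))" for y
    unfolding Q_def poly_prod by (intro prod.cong refl) (simp add: diff_divide_distrib algebra_simps)
  have dQ: "degree Q \<le> beta"
  proof -
    have "degree Q \<le> (\<Sum>i<r. (degree \<circ> (\<lambda>i. [:- real i / (real n - real i), real n / (real n - real i):])) i)"
      unfolding Q_def by (rule degree_prod_sum_le) simp
    also have "\<dots> \<le> (\<Sum>i<r. 1)" by (intro sum_mono) (simp add: o_def)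
    finally show ?thesis using r by simp
  qed
  have px: "poly Q (xk t) = pr n (k t) r" for t
    unfolding pQ pr_def xk_def using np by simp
  have "(\<Sum>t\<in>{0..beta}. wk t * pr n (k t) r) =
        (\<Sum>t\<in>{0..beta}. poly Q (xk t) * lagrange_basis xk beta t 1) - (\<Sum>t\<in>{0..beta}. poly Q (xk t) * lagrange_basis xk beta t 0)"
    unfolding wk_def px by (simp add: sum_subtractf algebra_simps)
  also have "\<dots> = poly Q 1 - poly Q 0"
    using lagrange_exact[OF xk_inj dQ] by simp
  also have "poly Q 1 = 1" unfolding pQ using r by (intro prod.neutral) auto
  also have "poly Q 0 = of_bool (r = 0)"
  proof (cases r)
    case 0 then show ?thesis by (simp add: pQ)
  next
    case (Suc r')
    then show ?thesis unfolding pQ by (auto intro!: prod_zero bexI[of _ 0])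
  qed
  finally show ?thesis by simp
qed

end

lemma prod_of_bool_subset: "finite S \<Longrightarrow> (\<Prod>j\<in>S. (of_bool (j \<in> A) :: real)) = of_bool (S \<subseteq> A)"
  by (induction S rule: finite_induct) auto

lemma rollout_outside: "Z \<in> set_pmf (rollout n k T) \<Longrightarrow> T < t \<Longrightarrow> Z t = {}"
proof (induction T arbitrary: Z)
  case 0 then show ?case by simp
next
  case (Suc T)
  then obtain Z0 B where "Z0 \<in> set_pmf (rollout n k T)" "Z = Z0(Suc T := Z0 T \<union> B)" by auto
  then show ?case using Suc by auto
qed

lemma rollout_support:
  assumes "k 0 = 0" "\<forall>t<T. k t \<le> k (Suc t)" "k T \<le> n" "Z \<in> set_pmf (rollout n k T)" "t \<le> T" "k t \<le> n"
  shows "Z t \<in> ksub n (k t)"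
proof -
  have "Z t \<in> set_pmf (map_pmf (\<lambda>Z. Z t) (rollout n k T))" using assms(4) by auto
  then show ?thesis using rollout_marg[OF assms(1-3,5)] set_pmf_U[OF assms(6)] by simp
qed

lemma finite_rollout:
  assumes "k 0 = 0" "\<forall>t<T. k t \<le> k (Suc t)" "k T \<le> n" "\<forall>t\<le>T. k t \<le> n"
  shows "finite (set_pmf (rollout n k T))"
proof -
  have "set_pmf (rollout n k T) \<subseteq> {f. \<forall>x. (x \<in> {..T} \<longrightarrow> f x \<in> Pow {..<n}) \<and> (x \<notin> {..T} \<longrightarrow> f x = {})}"
  proof (clarify, intro conjI impI)
    fix Z x assume Z: "Z \<in> set_pmf (rollout n k T)"
    { assume "x \<in> {..T}" then show "Z x \<in> Pow {..<n}"
        using rollout_support[OF assms(1-3) Z, of x] assms(4) by (auto simp: ksub_def) }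
    { assume "x \<notin> {..T}" then show "Z x = {}" using rollout_outside[OF Z] by auto }
  qed
  then show ?thesis by (rule finite_subset) (intro finite_set_of_finite_funs; simp)
qed

lemma mean_U:
  assumes E: "E \<subseteq> {..<n} \<times> {..<n}" and K: "K \<le> n"
  shows "measure_pmf.expectation (U n K) (Mf n E beta c) =
     (1 / real n) * (\<Sum>p\<in>Sigma {..<n} (small_subsets E beta). c (fst p) (snd p) * pr n K (card (snd p)))"
proof -
  let ?P = "Sigma {..<n} (small_subsets E beta)"
  have "measure_pmf.expectation (U n K) (\<lambda>A. \<Sum>p\<in>?P. c (fst p) (snd p) * of_bool (snd p \<subseteq> A)) =
     (\<Sum>p\<in>?P. measure_pmf.expectation (U n K) (\<lambda>A. c (fst p) (snd p) * of_bool (snd p \<subseteq> A)))"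
    by (rule Bochner_Integration.integral_sum) (rule intU[OF K])
  also have "\<dots> = (\<Sum>p\<in>?P. c (fst p) (snd p) * pr n K (card (snd p)))"
  proof (intro sum.cong refl)
    fix p assume "p \<in> ?P"
    then have "snd p \<subseteq> {..<n}" using small_sub[OF E, of "snd p" beta "fst p"] by (auto simp: mem_Sigma_iff)
    then show "measure_pmf.expectation (U n K) (\<lambda>A. c (fst p) (snd p) * of_bool (snd p \<subseteq> A)) =
        c (fst p) (snd p) * pr n K (card (snd p))" using U_indicator[OF _ K] by simp
  qed
  finally show ?thesis unfolding Mf_def by simp
qed

lemma main_thm:
  fixes n :: nat and E :: "(nat \<times> nat) set" and beta :: nat and c :: "nat \<Rightarrow> nat set \<Rightarrow> real"
    and Y :: "nat \<Rightarrow> nat set \<Rightarrow> real" and k :: "nat \<Rightarrow> nat" and \<sigma> :: real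
  assumes E: "E \<subseteq> {..<n} \<times> {..<n}"
    and HY: "\<forall>i<n. \<forall>Z\<subseteq>{..<n}. Y i Z = (\<Sum>S\<in>small_subsets E beta i. c i S * (\<Prod>j\<in>S. of_bool (j \<in> Z)))"
    and beta: "1 \<le> beta" and k0: "k 0 = 0" and kinc: "\<forall>t<beta. k t < k (Suc t)" and kn: "k beta \<le> n"
    and sig: "0 \<le> \<sigma>"
  shows "let M = design_measure n k beta; est = TTE_PI n k beta \<sigma> Y;
          d = real (max_degree n E); Ym = Y_max n E beta c;
          r = (real n / real (min_gap k beta)) ^ (2 * beta) in
       integrable M est \<and> integrable M (\<lambda>\<omega>. (est \<omega>)\<^sup>2) \<and>
       (\<integral>\<omega>. est \<omega> \<partial>M) = TTE n Y \<and>
       (\<integral>\<omega>. (est \<omega> - (\<integral>\<omega>'. est \<omega>' \<partial>M))\<^sup>2 \<partial>M)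
         \<le> 32 * (real beta ^ 2 * Ym ^ 2 * (d ^ 2 / real n + real beta ^ 2 / real (k 1)) * r
                + \<sigma> ^ 2 * real beta / real n * r)"
proof -
  note kctx = kinc kn k0 beta
  have npos: "0 < n" by (rule n_pos[OF kctx])
  have kle: "k t \<le> n" if "t \<le> beta" for t using k_le_n[OF kctx that] .
  have kmono: "\<forall>t<beta. k t \<le> k (Suc t)" using kinc by (simp add: less_imp_le)
  define R where "R = rollout n k beta"
  define I where "I = {..<n} \<times> {..beta}"
  define PG where "PG = PiM I (\<lambda>_. Gm)"
  define M where "M = design_measure n k beta"
  define est where "est = TTE_PI n k beta \<sigma> Y"
  define w where "w t = wk k beta n t" for t
  define F where "F A = Mf n E beta c A" for A
  define mt where "mt t = measure_pmf.expectation (U n (k t)) F" for t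
  define A' where "A' Z = (\<Sum>t\<in>{0..beta}. w t * F (Z t))" for Z :: "nat \<Rightarrow> nat set"
  define \<alpha> where "\<alpha> a = w (snd a) * \<sigma> / real n" for a :: "nat \<times> nat"
  define Nf where "Nf g = (\<Sum>a\<in>I. \<alpha> a * g a)" for g :: "nat \<times> nat \<Rightarrow> real"
  define Ym where "Ym = Y_max n E beta c"
  define D where "D = real (max_degree n E)"
  define r where "r = (real n / real (min_gap k beta)) ^ (2 * beta)"
  have fI: "finite I" unfolding I_def by simp
  have MPG: "M = measure_pmf R \<Otimes>\<^sub>M PG" unfolding M_def R_def PG_def I_def design_measure_def ..
  have PGp: "prob_space PG" unfolding PG_def using PiG_prob[OF fI] .
  interpret PG: prob_space PG by (rule PGp)
  have finR: "finite (set_pmf R)" unfolding R_def using finite_rollout[OF k0 kmono kn] kle by auto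
  have iR: "integrable (measure_pmf R) h" for h :: "_ \<Rightarrow> real"
    by (rule integrable_measure_pmf_finite[OF finR])
  have suppR: "Z t \<subseteq> {..<n}" if "Z \<in> set_pmf R" "t \<le> beta" for Z t
    using rollout_support[OF k0 kmono kn that(1)[unfolded R_def] that(2) kle[OF that(2)]] by (simp add: ksub_def)
  have Yform: "Y i A = (\<Sum>S\<in>small_subsets E beta i. c i S * of_bool (S \<subseteq> A))" if "A \<subseteq> {..<n}" "i < n" for i A
    using HY that small_sub[OF E] by (auto intro!: sum.cong simp: prod_of_bool_subset)
  have YF: "(1 / real n) * (\<Sum>i<n. Y i A) = F A" if A: "A \<subseteq> {..<n}" for A
  proof -
    have "(\<Sum>i<n. Y i A) = (\<Sum>i<n. \<Sum>S\<in>small_subsets E beta i. c i S * of_bool (S \<subseteq> A))"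
    proof (intro sum.cong refl)
      fix i assume i: "i \<in> {..<n}"
      show "Y i A = (\<Sum>S\<in>small_subsets E beta i. c i S * of_bool (S \<subseteq> A))"
        using HY i A small_sub[OF E] by (auto intro!: sum.cong simp: prod_of_bool_subset)
    qed
    also have "\<dots> = (\<Sum>p\<in>Sigma {..<n} (small_subsets E beta). c (fst p) (snd p) * of_bool (snd p \<subseteq> A))"
      by (rule sum_Sigma_fs[symmetric]) (auto intro: finite_small[OF E])
    finally show ?thesis unfolding F_def Mf_def by simp
  qed
  have xfun: "(\<lambda>t. real (k t) / real n) = xk k n" by (rule ext) (simp add: xk_def[OF kctx])
  have est_eq: "est \<omega> = A' (fst \<omega>) + Nf (snd \<omega>)" if "\<forall>t\<le>beta. fst \<omega> t \<subseteq> {..<n}" for \<omega>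
  proof -
    have "est \<omega> = (\<Sum>t\<in>{0..beta}. w t * ((1 / real n) * (\<Sum>i<n. Y i (fst \<omega> t)))) +
                   (\<Sum>t\<in>{0..beta}. \<Sum>i<n. \<alpha> (i, t) * snd \<omega> (i, t))"
      unfolding est_def TTE_PI_def Let_def xfun w_def[symmetric] \<alpha>_def
      by (simp add: sum.distrib sum_distrib_left algebra_simps w_def flip: wk_def[OF kctx])
    also have "(\<Sum>t\<in>{0..beta}. w t * ((1 / real n) * (\<Sum>i<n. Y i (fst \<omega> t)))) = A' (fst \<omega>)"
      unfolding A'_def
    proof (intro sum.cong refl)
      fix t assume "t \<in> {0..beta}"
      then have "fst \<omega> t \<subseteq> {..<n}" using that by simp
      then show "w t * ((1 / real n) * (\<Sum>i<n. Y i (fst \<omega> t))) = w t * F (fst \<omega> t)"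
        using YF by simp
    qed
    also have "(\<Sum>t\<in>{0..beta}. \<Sum>i<n. \<alpha> (i, t) * snd \<omega> (i, t)) = Nf (snd \<omega>)"
      unfolding Nf_def I_def
      by (subst sum.swap) (simp add: sum.cartesian_product atLeast0AtMost)
    finally show ?thesis .
  qed
  have AE_supp: "AE \<omega> in M. \<forall>t\<le>beta. fst \<omega> t \<subseteq> {..<n}"
  proof -
    have "AE Z in measure_pmf R. \<forall>t\<le>beta. Z t \<subseteq> {..<n}"
      using suppR by (simp add: AE_measure_pmf_iff)
    then have "AE Z in distr M (measure_pmf R) fst. \<forall>t\<le>beta. Z t \<subseteq> {..<n}"
      unfolding MPG PG.distr_pair_fst .
    then show ?thesis by (rule AE_distrD[OF measurable_fst[of "measure_pmf R" PG, folded MPG]])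
  qed
  have AE_est: "AE \<omega> in M. est \<omega> = A' (fst \<omega>) + Nf (snd \<omega>)"
    using AE_supp by eventually_elim (rule est_eq)
  note NM = noise_moments[OF fI, of \<alpha>, folded Nf_def PG_def]
  have i1: "integrable PG (\<lambda>_. 1::real)" by simp
  have e1: "integral\<^sup>L PG (\<lambda>_. 1::real) = 1" by (simp add: PG.prob_space)
  have mY: "(\<lambda>\<omega>. Y i (fst \<omega> t)) \<in> borel_measurable M" for i t
  proof -
    have "(\<lambda>Z. Y i (Z t)) \<in> borel_measurable (measure_pmf R)" by simp
    then show ?thesis unfolding MPG by (rule measurable_compose[OF measurable_fst])
  qed
  have mg: "(\<lambda>\<omega>. snd \<omega> a) \<in> borel_measurable M" if "a \<in> I" for a
  proof -
    have "(\<lambda>g. g a) \<in> measurable PG Gm" unfolding PG_def by (rule measurable_component_singleton[OF that])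
    moreover have "measurable PG Gm = measurable PG borel" by (rule measurable_cong_sets) auto
    ultimately have "(\<lambda>g. g a) \<in> borel_measurable PG" by simp
    then show ?thesis unfolding MPG by (rule measurable_compose[OF measurable_snd])
  qed
  have m_est: "est \<in> borel_measurable M"
    unfolding est_def TTE_PI_def Let_def
    by (intro borel_measurable_sum borel_measurable_times borel_measurable_add borel_measurable_const mY mg)
       (auto simp: I_def)
  define Cb where "Cb = (1 / real n) * (\<Sum>p\<in>Sigma {..<n} (small_subsets E beta). \<bar>c (fst p) (snd p)\<bar>)"
  have Fb: "\<bar>F A\<bar> \<le> Cb" for A
  proof -
    have "\<bar>\<Sum>p\<in>Sigma {..<n} (small_subsets E beta). c (fst p) (snd p) * of_bool (snd p \<subseteq> A)\<bar>
        \<le> (\<Sum>p\<in>Sigma {..<n} (small_subsets E beta). \<bar>c (fst p) (snd p) * of_bool (snd p \<subseteq> A)\<bar>)"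
      by (rule sum_abs)
    also have "\<dots> \<le> (\<Sum>p\<in>Sigma {..<n} (small_subsets E beta). \<bar>c (fst p) (snd p)\<bar>)"
      by (intro sum_mono) (simp add: abs_mult)
    finally show ?thesis unfolding F_def Mf_def Cb_def using npos
      by (simp add: abs_mult divide_right_mono)
  qed
  define BA where "BA = (\<Sum>t\<in>{0..beta}. \<bar>w t\<bar> * Cb)"
  have Ab: "\<bar>A' Z\<bar> \<le> BA" for Z
  proof -
    have "\<bar>A' Z\<bar> \<le> (\<Sum>t\<in>{0..beta}. \<bar>w t * F (Z t)\<bar>)" unfolding A'_def by (rule sum_abs)
    also have "\<dots> \<le> BA" unfolding BA_def
      by (intro sum_mono) (simp add: abs_mult mult_left_mono Fb)
    finally show ?thesis .
  qed
  define m where "m = measure_pmf.expectation R A'"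
  have Amb: "\<bar>A' Z - m\<bar> \<le> BA + \<bar>m\<bar>" for Z using Ab[of Z] by linarith
  have Amb2: "\<bar>(A' Z - m)\<^sup>2\<bar> \<le> (BA + \<bar>m\<bar>)\<^sup>2" for Z
  proof -
    have "\<bar>A' Z - m\<bar>\<^sup>2 \<le> (BA + \<bar>m\<bar>)\<^sup>2" by (rule power_mono[OF Amb]) simp
    then show ?thesis by simp
  qed
  have Amb2': "\<bar>2 * (A' Z - m)\<bar> \<le> 2 * (BA + \<bar>m\<bar>)" for Z using Amb[of Z] by simp
  have one: "\<bar>(\<lambda>_. 1::real) Z\<bar> \<le> 1" for Z :: "nat \<Rightarrow> nat set" by simp
  note pp = pair_prod[OF PGp]
  note P1 = pp[of A' BA "\<lambda>_. 1" R, OF Ab i1]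
  note P2 = pp[of "\<lambda>_. 1" 1 Nf R, OF one NM(1)]
  note P3 = pp[of "\<lambda>Z. (A' Z - m)\<^sup>2" "(BA + \<bar>m\<bar>)\<^sup>2" "\<lambda>_. 1" R, OF Amb2 i1]
  note P4 = pp[of "\<lambda>Z. 2 * (A' Z - m)" "2 * (BA + \<bar>m\<bar>)" Nf R, OF Amb2' NM(1)]
  note P5 = pp[of "\<lambda>_. 1" 1 "\<lambda>g. (Nf g)\<^sup>2" R, OF one NM(3)]
  define est' where "est' \<omega> = A' (fst \<omega>) * 1 + 1 * Nf (snd \<omega>)" for \<omega> :: "(nat \<Rightarrow> nat set) \<times> (nat \<times> nat \<Rightarrow> real)"
  have AE': "AE \<omega> in M. est \<omega> = est' \<omega>" using AE_est unfolding est'_def by simp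
  have int_est': "integrable M est'" unfolding est'_def MPG using P1(1) P2(1) by (rule Bochner_Integration.integrable_add)
  have m_est': "est' \<in> borel_measurable M" using int_est' by auto
  have int_est: "integrable M est" using integrable_cong_AE[OF m_est m_est' AE'] int_est' by simp
  have E_est: "integral\<^sup>L M est = m"
  proof -
    have "integral\<^sup>L M est = integral\<^sup>L M est'" by (rule integral_cong_AE[OF m_est m_est' AE'])
    also have "\<dots> = m * 1 + 1 * 0"
      unfolding est'_def MPG using P1 P2 NM(2) e1 by (simp add: Bochner_Integration.integral_add m_def)
    finally show ?thesis by simp
  qed
  have sq_eq: "(est' \<omega>)\<^sup>2 = (A' (fst \<omega>))\<^sup>2 * 1 + 2 * A' (fst \<omega>) * Nf (snd \<omega>) + 1 * (Nf (snd \<omega>))\<^sup>2" for \<omega>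
    unfolding est'_def by (simp add: power2_eq_square algebra_simps)
  have Ab2: "\<bar>(A' Z)\<^sup>2\<bar> \<le> BA\<^sup>2" for Z
  proof -
    have "\<bar>A' Z\<bar>\<^sup>2 \<le> BA\<^sup>2" by (rule power_mono[OF Ab]) simp
    then show ?thesis by simp
  qed
  have Ab2': "\<bar>2 * A' Z\<bar> \<le> 2 * BA" for Z using Ab[of Z] by simp
  note Q1 = pp[of "\<lambda>Z. (A' Z)\<^sup>2" "BA\<^sup>2" "\<lambda>_. 1" R, OF Ab2 i1]
  note Q2 = pp[of "\<lambda>Z. 2 * A' Z" "2 * BA" Nf R, OF Ab2' NM(1)]
  have int_est'2: "integrable M (\<lambda>\<omega>. (est' \<omega>)\<^sup>2)"
    unfolding sq_eq MPG using Q1(1) Q2(1) P5(1) by (simp add: mult.assoc)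
  have m_est2: "(\<lambda>\<omega>. (est \<omega>)\<^sup>2) \<in> borel_measurable M" using m_est by simp
  have int_est2: "integrable M (\<lambda>\<omega>. (est \<omega>)\<^sup>2)"
  proof -
    have AE2: "AE x in M. (est x)\<^sup>2 = (est' x)\<^sup>2" using AE' by eventually_elim simp
    show ?thesis using integrable_cong_AE[OF m_est2, of "\<lambda>\<omega>. (est' \<omega>)\<^sup>2"] int_est'2 AE2 by auto
  qed
  let ?P = "Sigma {..<n} (small_subsets E beta)"
  have cardS: "card (snd p) \<le> beta" "card (snd p) \<le> n" "snd p \<subseteq> {..<n}" "finite (snd p)" if "p \<in> ?P" for p
  proof -
    have h: "snd p \<subseteq> {..<n} \<and> card (snd p) \<le> beta \<and> finite (snd p)"
      using that small_sub[OF E, of "snd p" beta "fst p"] by (auto simp: mem_Sigma_iff)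
    then show "card (snd p) \<le> beta" "snd p \<subseteq> {..<n}" "finite (snd p)" by auto
    show "card (snd p) \<le> n" using h card_mono[of "{..<n}" "snd p"] by auto
  qed
  have mt_eq: "mt t = (1 / real n) * (\<Sum>p\<in>?P. c (fst p) (snd p) * pr n (k t) (card (snd p)))" if "t \<le> beta" for t
    unfolding mt_def F_def using mean_U[OF E kle[OF that]] by (simp add: fun_eq_iff)
  have ER_F: "measure_pmf.expectation R (\<lambda>Z. F (Z t)) = mt t" if "t \<le> beta" for t
  proof -
    have "measure_pmf.expectation R (\<lambda>Z. F (Z t)) = measure_pmf.expectation (map_pmf (\<lambda>Z. Z t) R) F"
      by simp
    also have "map_pmf (\<lambda>Z. Z t) R = U n (k t)" unfolding R_def by (rule rollout_marg[OF k0 kmono kn that])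
    finally show ?thesis unfolding mt_def .
  qed
  have m_sum: "m = (\<Sum>t\<in>{0..beta}. w t * mt t)"
  proof -
    have "m = (\<Sum>t\<in>{0..beta}. measure_pmf.expectation R (\<lambda>Z. w t * F (Z t)))"
      unfolding m_def A'_def by (rule Bochner_Integration.integral_sum) (rule iR)
    also have "\<dots> = (\<Sum>t\<in>{0..beta}. w t * mt t)" by (intro sum.cong refl) (simp add: ER_F)
    finally show ?thesis .
  qed
  have m_TTE: "m = TTE n Y"
  proof -
    have "m = (\<Sum>t\<in>{0..beta}. w t * ((1 / real n) * (\<Sum>p\<in>?P. c (fst p) (snd p) * pr n (k t) (card (snd p)))))"
      unfolding m_sum by (intro sum.cong refl) (simp add: mt_eq)
    also have "\<dots> = (1 / real n) * (\<Sum>p\<in>?P. c (fst p) (snd p) * (\<Sum>t\<in>{0..beta}. w t * pr n (k t) (card (snd p))))"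
      by (simp add: sum_distrib_left sum_distrib_right algebra_simps sum.swap[of _ "{0..beta}"])
    also have "\<dots> = (1 / real n) * (\<Sum>p\<in>?P. c (fst p) (snd p) * of_bool (card (snd p) \<noteq> 0))"
      unfolding w_def using cardS by (simp add: interp_pr[OF kctx])
    also have "\<dots> = TTE n Y"
    proof -
      have "(\<Sum>p\<in>?P. c (fst p) (snd p) * of_bool (card (snd p) \<noteq> 0)) =
            (\<Sum>i<n. \<Sum>S\<in>small_subsets E beta i. c i S * of_bool (card S \<noteq> 0))"
        by (rule sum_Sigma_fs) (auto intro: finite_small[OF E])
      also have "\<dots> = (\<Sum>i<n. Y i {..<n} - Y i {})"
      proof (intro sum.cong refl)
        fix i assume i: "i \<in> {..<n}"
        have "Y i {..<n} - Y i {} = (\<Sum>S\<in>small_subsets E beta i. c i S * (of_bool (S \<subseteq> {..<n}) - of_bool (S \<subseteq> {})))"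
        proof -
          have i': "i < n" using i by simp
          show ?thesis unfolding Yform[OF subset_refl i'] Yform[OF empty_subsetI i']
            by (simp only: sum_subtractf right_diff_distrib)
        qed
        also have "\<dots> = (\<Sum>S\<in>small_subsets E beta i. c i S * of_bool (card S \<noteq> 0))"
          using small_sub[OF E, of _ beta i] by (intro sum.cong refl) auto
        finally show "(\<Sum>S\<in>small_subsets E beta i. c i S * of_bool (card S \<noteq> 0)) = Y i {..<n} - Y i {}" by simp
      qed
      finally show ?thesis unfolding TTE_def by simp
    qed
    finally show ?thesis .
  qed
  have var_eq: "(\<integral>\<omega>. (est \<omega> - integral\<^sup>L M est)\<^sup>2 \<partial>M) =
      measure_pmf.expectation R (\<lambda>Z. (A' Z - m)\<^sup>2) + (\<Sum>a\<in>I. (\<alpha> a)\<^sup>2)"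
  proof -
    have sq2: "(est' \<omega> - m)\<^sup>2 = ((A' (fst \<omega>) - m)\<^sup>2 * 1 + 2 * (A' (fst \<omega>) - m) * Nf (snd \<omega>)) + 1 * (Nf (snd \<omega>))\<^sup>2" for \<omega>
      unfolding est'_def by (simp add: power2_eq_square algebra_simps)
    have m1: "(\<lambda>\<omega>. (est \<omega> - m)\<^sup>2) \<in> borel_measurable M" using m_est by simp
    have m2: "(\<lambda>\<omega>. (est' \<omega> - m)\<^sup>2) \<in> borel_measurable M" using m_est' by simp
    have AE3: "AE \<omega> in M. (est \<omega> - m)\<^sup>2 = (est' \<omega> - m)\<^sup>2" using AE' by eventually_elim simp
    have "(\<integral>\<omega>. (est \<omega> - integral\<^sup>L M est)\<^sup>2 \<partial>M) = (\<integral>\<omega>. (est' \<omega> - m)\<^sup>2 \<partial>M)"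
      unfolding E_est by (rule integral_cong_AE[OF m1 m2 AE3])
    also have "\<dots> = (measure_pmf.expectation R (\<lambda>Z. (A' Z - m)\<^sup>2) * 1 +
                     measure_pmf.expectation R (\<lambda>Z. 2 * (A' Z - m)) * 0) + 1 * (\<Sum>a\<in>I. (\<alpha> a)\<^sup>2)"
    proof -
      have i34: "integrable M (\<lambda>\<omega>. (A' (fst \<omega>) - m)\<^sup>2 * 1 + 2 * (A' (fst \<omega>) - m) * Nf (snd \<omega>))"
        unfolding MPG using P3(1) P4(1) by (rule Bochner_Integration.integrable_add)
      have "(\<integral>\<omega>. (est' \<omega> - m)\<^sup>2 \<partial>M) =
          (\<integral>\<omega>. (A' (fst \<omega>) - m)\<^sup>2 * 1 + 2 * (A' (fst \<omega>) - m) * Nf (snd \<omega>) \<partial>M) + (\<integral>\<omega>. 1 * (Nf (snd \<omega>))\<^sup>2 \<partial>M)"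
        unfolding sq2 using i34 P5(1) unfolding MPG by (rule Bochner_Integration.integral_add)
      also have "(\<integral>\<omega>. (A' (fst \<omega>) - m)\<^sup>2 * 1 + 2 * (A' (fst \<omega>) - m) * Nf (snd \<omega>) \<partial>M) =
           (\<integral>\<omega>. (A' (fst \<omega>) - m)\<^sup>2 * 1 \<partial>M) + (\<integral>\<omega>. 2 * (A' (fst \<omega>) - m) * Nf (snd \<omega>) \<partial>M)"
        using P3(1) P4(1) unfolding MPG by (rule Bochner_Integration.integral_add)
      finally show ?thesis unfolding MPG using P3(2) P4(2) P5(2) NM(2) NM(4) e1 by simp
    qed
    finally show ?thesis by simp
  qed
  define V1 where "V1 = Ym ^ 2 * D ^ 2 / real n + 2 * real beta ^ 2 * Ym ^ 2 / real (k 1)"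
  have Fdef: "F = Mf n E beta c" by (rule ext) (simp add: F_def)
  have r_nn: "0 \<le> r" unfolding r_def by simp
  have vt: "measure_pmf.expectation R (\<lambda>Z. (F (Z t) - mt t)\<^sup>2) \<le> V1" if t: "t \<le> beta" for t
  proof -
    have "measure_pmf.expectation R (\<lambda>Z. (F (Z t) - mt t)\<^sup>2) =
          measure_pmf.expectation (map_pmf (\<lambda>Z. Z t) R) (\<lambda>A. (F A - mt t)\<^sup>2)" by simp
    also have "map_pmf (\<lambda>Z. Z t) R = U n (k t)" unfolding R_def by (rule rollout_marg[OF k0 kmono kn t])
    also have "measure_pmf.expectation (U n (k t)) (\<lambda>A. (F A - mt t)\<^sup>2) \<le>
        Ym ^ 2 * D ^ 2 / real n + 2 * real beta ^ 2 * Ym ^ 2 / real (k t)"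
      unfolding mt_def Fdef Ym_def D_def using var_U[OF E npos beta kle[OF t]] by simp
    also have "2 * real beta ^ 2 * Ym ^ 2 / real (k t) \<le> 2 * real beta ^ 2 * Ym ^ 2 / real (k 1)"
    proof (cases "t = 0")
      case True then show ?thesis using k0 by simp
    next
      case False
      have "k 1 \<le> k t" using False t by (intro k_mono[OF kctx]) auto
      then show ?thesis using k1_pos[OF kctx] by (intro divide_left_mono) auto
    qed
    finally show ?thesis unfolding V1_def by simp
  qed
  have VR: "measure_pmf.expectation R (\<lambda>Z. (A' Z - m)\<^sup>2) \<le> real (beta + 1) * (4 * r) * (real (beta + 1) * V1)"
  proof -
    have pt: "(A' Z - m)\<^sup>2 \<le> real (beta + 1) * (\<Sum>t\<in>{0..beta}. 4 * r * (F (Z t) - mt t)\<^sup>2)" for Z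
    proof -
      have "A' Z - m = (\<Sum>t\<in>{0..beta}. w t * (F (Z t) - mt t))"
        unfolding A'_def m_sum by (simp add: sum_subtractf right_diff_distrib)
      then have "(A' Z - m)\<^sup>2 \<le> (\<Sum>t\<in>{0..beta}. (w t * (F (Z t) - mt t))\<^sup>2) * card {0..beta}"
        using sum_squared_le_sum_of_squares[of "\<lambda>t. w t * (F (Z t) - mt t)" "{0..beta}"] by simp
      also have "\<dots> \<le> (\<Sum>t\<in>{0..beta}. 4 * r * (F (Z t) - mt t)\<^sup>2) * card {0..beta}"
      proof (intro mult_right_mono sum_mono)
        fix t assume "t \<in> {0..beta}"
        then have "(w t)\<^sup>2 \<le> 4 * r" unfolding w_def r_def using wk_sq[OF kctx] by simp
        then show "(w t * (F (Z t) - mt t))\<^sup>2 \<le> 4 * r * (F (Z t) - mt t)\<^sup>2"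
          by (simp add: power_mult_distrib mult_right_mono)
      qed simp
      finally show ?thesis by (simp add: mult.commute)
    qed
    have "measure_pmf.expectation R (\<lambda>Z. (A' Z - m)\<^sup>2) \<le>
          measure_pmf.expectation R (\<lambda>Z. real (beta + 1) * (\<Sum>t\<in>{0..beta}. 4 * r * (F (Z t) - mt t)\<^sup>2))"
      by (rule integral_mono[OF iR iR]) (rule pt)
    also have "\<dots> = real (beta + 1) * (\<Sum>t\<in>{0..beta}. 4 * r * measure_pmf.expectation R (\<lambda>Z. (F (Z t) - mt t)\<^sup>2))"
      by (simp add: Bochner_Integration.integral_sum iR)
    also have "\<dots> \<le> real (beta + 1) * (\<Sum>t\<in>{0..beta}. 4 * r * V1)"
      using r_nn by (intro mult_left_mono sum_mono vt) auto
    also have "\<dots> = real (beta + 1) * (4 * r) * (real (beta + 1) * V1)" by simp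
    finally show ?thesis .
  qed
  have noise: "(\<Sum>a\<in>I. (\<alpha> a)\<^sup>2) \<le> 4 * real (beta + 1) * r * \<sigma>\<^sup>2 / real n"
  proof -
    have "(\<Sum>a\<in>I. (\<alpha> a)\<^sup>2) = (\<Sum>i<n. \<Sum>t\<le>beta. (w t * \<sigma> / real n)\<^sup>2)"
      unfolding I_def \<alpha>_def
      using sum.cartesian_product[where g="\<lambda>i t. (w t * \<sigma> / real n)\<^sup>2" and A="{..<n}" and B="{..beta}"]
      by (simp add: split_beta)
    also have "\<dots> = real n * (\<Sum>t\<le>beta. (w t)\<^sup>2 * (\<sigma>\<^sup>2 / (real n)\<^sup>2))"
      by (simp add: power_mult_distrib power_divide)
    also have "\<dots> \<le> real n * (\<Sum>t\<le>beta. (4 * r) * (\<sigma>\<^sup>2 / (real n)\<^sup>2))"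
    proof (intro mult_left_mono sum_mono mult_right_mono)
      fix t assume "t \<in> {..beta}"
      then show "(w t)\<^sup>2 \<le> 4 * r" unfolding w_def r_def using wk_sq[OF kctx] by simp
    qed (auto simp: r_nn)
    also have "\<dots> = 4 * real (beta + 1) * r * \<sigma>\<^sup>2 / real n"
      using npos by (simp add: power2_eq_square field_simps)
    finally show ?thesis .
  qed
  define b where "b = real beta"
  define X where "X = Ym ^ 2 * (D ^ 2 / real n + b ^ 2 / real (k 1))"
  have b1: "1 \<le> b" unfolding b_def using beta by simp
  have X0: "0 \<le> X" unfolding X_def by simp
  have V1X: "V1 \<le> 2 * X"
  proof -
    have h: "0 \<le> Ym ^ 2 * D ^ 2 / real n" by simp
    have "V1 = Ym ^ 2 * D ^ 2 / real n + 2 * (Ym ^ 2 * (b ^ 2 / real (k 1)))"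
      unfolding V1_def b_def by simp
    also have "2 * X = 2 * (Ym ^ 2 * D ^ 2 / real n) + 2 * (Ym ^ 2 * (b ^ 2 / real (k 1)))"
      unfolding X_def by (simp add: algebra_simps)
    ultimately show ?thesis using h by linarith
  qed
  have V10: "0 \<le> V1" unfolding V1_def by simp
  have bb: "(b + 1)\<^sup>2 \<le> 4 * b\<^sup>2"
  proof -
    have "b + 1 \<le> 2 * b" using b1 by simp
    then have "(b + 1)\<^sup>2 \<le> (2 * b)\<^sup>2" by (rule power_mono) (use b1 in simp)
    then show ?thesis by (simp add: power_mult_distrib)
  qed
  have T1: "real (beta + 1) * (4 * r) * (real (beta + 1) * V1) \<le> 32 * (b ^ 2 * X * r)"
  proof -
    have "real (beta + 1) * (4 * r) * (real (beta + 1) * V1) = 4 * r * ((b + 1)\<^sup>2 * V1)"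
      unfolding b_def by (simp add: power2_eq_square algebra_simps)
    also have "\<dots> \<le> 4 * r * ((4 * b\<^sup>2) * (2 * X))"
      using bb V1X V10 r_nn by (intro mult_left_mono mult_mono) auto
    also have "\<dots> = 32 * (b ^ 2 * X * r)" by (simp add: algebra_simps)
    finally show ?thesis .
  qed
  have T2: "4 * real (beta + 1) * r * \<sigma>\<^sup>2 / real n \<le> 32 * (\<sigma> ^ 2 * b / real n * r)"
  proof -
    have "4 * real (beta + 1) * r * \<sigma>\<^sup>2 / real n = (4 * (b + 1)) * (r * \<sigma>\<^sup>2 / real n)"
      unfolding b_def by (simp add: algebra_simps add_divide_distrib)
    also have "\<dots> \<le> (32 * b) * (r * \<sigma>\<^sup>2 / real n)"
      using b1 r_nn by (intro mult_right_mono) auto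
    also have "\<dots> = 32 * (\<sigma> ^ 2 * b / real n * r)" by (simp add: algebra_simps)
    finally show ?thesis .
  qed
  have var_bd: "(\<integral>\<omega>. (est \<omega> - integral\<^sup>L M est)\<^sup>2 \<partial>M)
      \<le> 32 * (real beta ^ 2 * Ym ^ 2 * (D ^ 2 / real n + real beta ^ 2 / real (k 1)) * r
                + \<sigma> ^ 2 * real beta / real n * r)"
  proof -
    have "(\<integral>\<omega>. (est \<omega> - integral\<^sup>L M est)\<^sup>2 \<partial>M) \<le> 32 * (b ^ 2 * X * r) + 32 * (\<sigma> ^ 2 * b / real n * r)"
      unfolding var_eq using VR noise T1 T2 by linarith
    also have "\<dots> = 32 * (real beta ^ 2 * Ym ^ 2 * (D ^ 2 / real n + real beta ^ 2 / real (k 1)) * r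
                + \<sigma> ^ 2 * real beta / real n * r)"
      unfolding X_def b_def by (simp add: algebra_simps)
    finally show ?thesis .
  qed
  have all: "integrable M est \<and> integrable M (\<lambda>\<omega>. (est \<omega>)\<^sup>2) \<and> integral\<^sup>L M est = TTE n Y \<and>
      (\<integral>\<omega>. (est \<omega> - integral\<^sup>L M est)\<^sup>2 \<partial>M)
      \<le> 32 * (real beta ^ 2 * Ym ^ 2 * (D ^ 2 / real n + real beta ^ 2 / real (k 1)) * r
                + \<sigma> ^ 2 * real beta / real n * r)"
    using int_est int_est2 E_est m_TTE var_bd by simp
  show ?thesis unfolding Let_def using all unfolding M_def est_def Ym_def D_def r_def .
qed

theorem theorem2:
  "\<exists>C::real. \<forall>(n::nat) (E::(nat \<times> nat) set) (beta::nat) (c::nat \<Rightarrow> nat set \<Rightarrow> real)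
      (Y::nat \<Rightarrow> nat set \<Rightarrow> real) (k::nat \<Rightarrow> nat) (\<sigma>::real).
     E \<subseteq> {..<n} \<times> {..<n} \<longrightarrow>
     (\<forall>i<n. \<forall>Z\<subseteq>{..<n}. Y i Z = (\<Sum>S\<in>small_subsets E beta i. c i S * (\<Prod>j\<in>S. of_bool (j \<in> Z)))) \<longrightarrow>
     1 \<le> beta \<longrightarrow> k 0 = 0 \<longrightarrow> (\<forall>t<beta. k t < k (Suc t)) \<longrightarrow> k beta \<le> n \<longrightarrow>
     0 \<le> \<sigma> \<longrightarrow>
     (let M = design_measure n k beta; est = TTE_PI n k beta \<sigma> Y;
          d = real (max_degree n E); Ym = Y_max n E beta c;
          r = (real n / real (min_gap k beta)) ^ (2 * beta) in
       integrable M est \<and> integrable M (\<lambda>\<omega>. (est \<omega>)\<^sup>2) \<and>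
       (\<integral>\<omega>. est \<omega> \<partial>M) = TTE n Y \<and>
       (\<integral>\<omega>. (est \<omega> - (\<integral>\<omega>'. est \<omega>' \<partial>M))\<^sup>2 \<partial>M)
         \<le> C * (real beta ^ 2 * Ym ^ 2 * (d ^ 2 / real n + real beta ^ 2 / real (k 1)) * r
                + \<sigma> ^ 2 * real beta / real n * r))"
  apply (rule exI[of _ 32])
  apply (intro allI impI)
  apply (rule main_thm)
        apply assumption+
  done

end
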